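(* For each $p>0$, there exists a $\Sigma^0_p$ equivalence relation $E$ on $\omega$ which is complete under finitary reducibility among $\Sigma^0_p$ equivalence relations (every $\Sigma^0_p$ equivalence relation $F$ satisfies $F\leq_c^{<\omega}E$), but is not complete under computable reducibility among them (some $\Sigma^0_p$ equivalence relation $F$ has $F\not\leq_cE$).
   Context: For equivalence relations $E,F$ on $\omega$, $F\leq_cE$ means there is a total computable $g$ with $x\,F\,y\iff g(x)\,E\,g(y)$ for all $x,y$. $F\leq_c^{<\omega}E$ means there is one total computable function which, given $n\ge1$ and an $n$-tuple $(x_0,\dots,x_{n-1})$, outputs an $n$-tuple $(y_0,\dots,y_{n-1})$ with $x_i\,F\,x_j\iff y_i\,E\,y_j$ for all $i<j<n$. A $\Sigma^0_p$ equivalence relation is an equivalence relation on $\omega$ that is a $\Sigma^0_p$ subset of $\omega\times\omega$. *)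

theory Defs
  imports Main "HOL-Library.Nat_Bijection"
begin

text \<open>A function on
  nat lists of arity n is only relevant on lists of length n.\<close>

inductive total_rec :: "nat \<Rightarrow> (nat list \<Rightarrow> nat) \<Rightarrow> bool" where
  zero: "total_rec n (\<lambda>_. 0)"
| succ: "total_rec 1 (\<lambda>xs. Suc (hd xs))"
| proj: "i < n \<Longrightarrow> total_rec n (\<lambda>xs. xs ! i)"
| comp: "\<lbrakk> total_rec m f; length gs = m; \<forall>g\<in>set gs. total_rec n g \<rbrakk>
         \<Longrightarrow> total_rec n (\<lambda>xs. f (map (\<lambda>g. g xs) gs))"
| prim: "\<lbrakk> total_rec n g; total_rec (n + 2) h \<rbrakk>
         \<Longrightarrow> total_rec (Suc n)
               (\<lambda>xs. rec_nat (g (tl xs)) (\<lambda>k r. h (k # r # tl xs)) (hd xs))"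
| mu: "\<lbrakk> total_rec (Suc n) f; \<forall>xs. length xs = n \<longrightarrow> (\<exists>y. f (y # xs) = 0) \<rbrakk>
         \<Longrightarrow> total_rec n (\<lambda>xs. LEAST y. f (y # xs) = 0)"
| ext: "\<lbrakk> total_rec n f; \<forall>xs. length xs = n \<longrightarrow> g xs = f xs \<rbrakk> \<Longrightarrow> total_rec n g"

definition computable1 :: "(nat \<Rightarrow> nat) \<Rightarrow> bool" where
  "computable1 g \<longleftrightarrow> total_rec 1 (\<lambda>xs. g (hd xs))"

definition decidable_rel :: "nat \<Rightarrow> (nat list \<Rightarrow> bool) \<Rightarrow> bool" where
  "decidable_rel n R \<longleftrightarrow>
     (\<exists>f. total_rec n f \<and> (\<forall>xs. length xs = n \<longrightarrow> (R xs \<longleftrightarrow> f xs = 0)))"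

text \<open>Sigma^0_p relations of arity n: Sigma_0 = computable,
  Sigma_{p+1} = existential projection of the complement of a Sigma_p relation
  (i.e. of a Pi_p relation).\<close>

fun sigma_rel :: "nat \<Rightarrow> nat \<Rightarrow> (nat list \<Rightarrow> bool) \<Rightarrow> bool" where
  "sigma_rel 0 n R = decidable_rel n R"
| "sigma_rel (Suc p) n R =
     (\<exists>Q. sigma_rel p (Suc n) Q \<and>
          (\<forall>xs. length xs = n \<longrightarrow> (R xs \<longleftrightarrow> (\<exists>y. \<not> Q (y # xs)))))"

definition sigma_eqrel :: "nat \<Rightarrow> (nat \<Rightarrow> nat \<Rightarrow> bool) \<Rightarrow> bool" where
  "sigma_eqrel p E \<longleftrightarrow> equivp E \<and> sigma_rel p 2 (\<lambda>xs. E (xs ! 0) (xs ! 1))"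

definition computably_reducible :: "(nat \<Rightarrow> nat \<Rightarrow> bool) \<Rightarrow> (nat \<Rightarrow> nat \<Rightarrow> bool) \<Rightarrow> bool" where
  "computably_reducible F E \<longleftrightarrow>
     (\<exists>g. computable1 g \<and> (\<forall>x y. F x y \<longleftrightarrow> E (g x) (g y)))"

text \<open>Finitary reducibility: a single total computable function, acting on
  codes (list_encode) of nonempty finite tuples, sending each n-tuple to an
  n-tuple that reflects F-equivalences as E-equivalences.\<close>

definition finitary_reducible :: "(nat \<Rightarrow> nat \<Rightarrow> bool) \<Rightarrow> (nat \<Rightarrow> nat \<Rightarrow> bool) \<Rightarrow> bool" where
  "finitary_reducible F E \<longleftrightarrow>
     (\<exists>g. computable1 g \<and>
        (\<forall>xs. xs \<noteq> [] \<longrightarrow>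
           (\<exists>ys. g (list_encode xs) = list_encode ys \<and> length ys = length xs \<and>
              (\<forall>i j. i < j \<and> j < length xs \<longrightarrow>
                  (F (xs ! i) (xs ! j) \<longleftrightarrow> E (ys ! i) (ys ! j))))))"

end

theory Submission
  imports Defs
begin

lemma tr_ext: "total_rec n f \<Longrightarrow> (\<And>xs. length xs = n \<Longrightarrow> g xs = f xs) \<Longrightarrow> total_rec n g"
  using total_rec.ext by blast

lemma tr_const: "total_rec n (\<lambda>_. c)"
proof (induction c)
  case 0 then show ?case by (rule total_rec.zero)
next
  case (Suc c)
  have "total_rec n (\<lambda>xs. (\<lambda>ys. Suc (hd ys)) (map (\<lambda>g. g xs) [\<lambda>_. c]))"
    by (rule total_rec.comp[OF total_rec.succ]) (use Suc in auto)
  then show ?case by simp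
qed

lemma tr_proj: "i < n \<Longrightarrow> total_rec n (\<lambda>xs. xs ! i)"
  by (rule total_rec.proj)

lemma tr_comp_list:
  assumes "total_rec m f" "\<And>i. i < m \<Longrightarrow> total_rec n (G i)"
  shows "total_rec n (\<lambda>xs. f (map (\<lambda>i. G i xs) [0..<m]))"
proof -
  have "total_rec n (\<lambda>xs. f (map (\<lambda>g. g xs) (map G [0..<m])))"
    by (rule total_rec.comp[OF assms(1)]) (use assms(2) in auto)
  then show ?thesis by (simp add: comp_def)
qed

lemma map_nth_upt: "length xs = n \<Longrightarrow> map (\<lambda>i. xs ! i) [0..<n] = xs"
  by (simp add: list_eq_iff_nth_eq)

lemma tr_succ: "total_rec (Suc 0) (\<lambda>ys. Suc (hd ys))"
  using total_rec.succ by simp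

lemma tr_rec:
  assumes a: "total_rec n a" and g: "total_rec n g" and h: "total_rec (Suc (Suc n)) h"
  shows "total_rec n (\<lambda>xs. rec_nat (g xs) (\<lambda>k r. h (k # r # xs)) (a xs))"
proof -
  have P: "total_rec (Suc n) (\<lambda>xs. rec_nat (g (tl xs)) (\<lambda>k r. h (k # r # tl xs)) (hd xs))"
    using total_rec.prim[OF g] h by (simp add: numeral_2_eq_2)
  define G where "G i = (if i = 0 then a else (\<lambda>xs. xs ! (i - 1)))" for i
  have "total_rec n (\<lambda>xs. (\<lambda>xs. rec_nat (g (tl xs)) (\<lambda>k r. h (k # r # tl xs)) (hd xs)) (map (\<lambda>i. G i xs) [0..<Suc n]))"
    by (rule tr_comp_list[OF P]) (auto simp: G_def a intro: tr_proj)
  moreover have "map (\<lambda>i. G i xs) [0..<Suc n] = a xs # xs" if "length xs = n" for xs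
  proof -
    have "[0..<Suc n] = 0 # map Suc [0..<n]" by (simp add: map_Suc_upt upt_conv_Cons)
    then show ?thesis using that by (simp add: G_def comp_def map_nth_upt)
  qed
  ultimately show ?thesis by (auto intro: tr_ext)
qed

datatype ex = V nat | C nat | Add ex ex | Sub ex ex | Mul ex ex | Sum ex ex | Rec ex ex ex
  | App ex "ex list" | Fn "nat list \<Rightarrow> nat"

fun ev :: "ex \<Rightarrow> nat list \<Rightarrow> nat" where
  "ev (V i) env = env ! i"
| "ev (C c) env = c"
| "ev (Add a b) env = ev a env + ev b env"
| "ev (Sub a b) env = ev a env - ev b env"
| "ev (Mul a b) env = ev a env * ev b env"
| "ev (Sum b f) env = (\<Sum>k<ev b env. ev f (k # env))"
| "ev (Rec a g h) env = rec_nat (ev g env) (\<lambda>k r. ev h (k # r # env)) (ev a env)"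
| "ev (App f as) env = ev f (map (\<lambda>a. ev a env) as)"
| "ev (Fn f) env = f env"

fun wfx :: "nat \<Rightarrow> ex \<Rightarrow> bool" where
  "wfx n (V i) = (i < n)"
| "wfx n (C c) = True"
| "wfx n (Add a b) = (wfx n a \<and> wfx n b)"
| "wfx n (Sub a b) = (wfx n a \<and> wfx n b)"
| "wfx n (Mul a b) = (wfx n a \<and> wfx n b)"
| "wfx n (Sum b f) = (wfx n b \<and> wfx (Suc n) f)"
| "wfx n (Rec a g h) = (wfx n a \<and> wfx n g \<and> wfx (Suc (Suc n)) h)"
| "wfx n (App f as) = (wfx (length as) f \<and> (\<forall>a\<in>set as. wfx n a))"
| "wfx n (Fn f) = total_rec n f"

lemma tr_op2:
  assumes "total_rec 2 (\<lambda>ys. op (ys ! 0) (ys ! 1))" "total_rec n a" "total_rec n b"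
  shows "total_rec n (\<lambda>xs. op (a xs) (b xs))"
proof -
  define G where "G i = (if i = 0 then a else b)" for i :: nat
  have "total_rec n (\<lambda>xs. (\<lambda>ys. op (ys ! 0) (ys ! 1)) (map (\<lambda>i. G i xs) [0..<2]))"
    by (rule tr_comp_list[OF assms(1)]) (auto simp: G_def assms)
  then show ?thesis by (simp add: G_def upt_conv_Cons)
qed

lemma tr_add2: "total_rec 2 (\<lambda>ys. ys ! 0 + ys ! 1)"
proof -
  have 1: "total_rec 2 (\<lambda>xs. rec_nat (xs ! 1) (\<lambda>k r. Suc ((k # r # xs) ! 1)) (xs ! 0))"
    apply (rule tr_rec) apply (auto intro: tr_proj)
    apply (rule total_rec.comp[where gs = "[\<lambda>ys. ys ! 1]" and f = "\<lambda>ys. Suc (hd ys)", THEN tr_ext])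
    by (auto intro: tr_succ tr_proj)
  have 2: "rec_nat y (\<lambda>k r. Suc r) x = x + y" for x y :: nat by (induction x) auto
  show ?thesis by (rule tr_ext[OF 1]) (simp add: 2 add.commute)
qed

lemma rec_pred: "rec_nat 0 (\<lambda>k r. k) x = x - (1::nat)" by (cases x) auto
lemma rec_sub: "rec_nat a (\<lambda>k r. r - 1) x = a - (x::nat)" by (induction x) auto
lemma rec_mul: "rec_nat 0 (\<lambda>k r. r + y) x = x * (y::nat)" by (induction x) auto

lemma tr_pred: "total_rec 1 (\<lambda>ys. ys ! 0 - 1)"
proof -
  have 1: "total_rec 1 (\<lambda>xs. rec_nat ((\<lambda>_. 0) xs) (\<lambda>k r. (\<lambda>zs. zs ! 0) (k # r # xs)) (xs ! 0))"
    by (rule tr_rec[where h = "\<lambda>zs. zs ! 0"]) (auto intro: tr_proj tr_const)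
  show ?thesis by (rule tr_ext[OF 1]) (simp add: rec_pred)
qed

lemma tr_comp1:
  assumes "total_rec 1 (\<lambda>ys. f (ys ! 0))" "total_rec n a"
  shows "total_rec n (\<lambda>xs. f (a xs))"
proof -
  have 1: "total_rec n (\<lambda>xs. (\<lambda>ys. f (ys ! 0)) (map (\<lambda>i. a xs) [0..<1]))"
    by (rule tr_comp_list[OF assms(1)]) (use assms(2) in auto)
  show ?thesis by (rule tr_ext[OF 1]) simp
qed

lemma tr_sub2: "total_rec 2 (\<lambda>ys. ys ! 0 - ys ! 1)"
proof -
  have h: "total_rec (Suc (Suc 2)) (\<lambda>zs. zs ! 1 - 1)"
    by (rule tr_comp1[OF tr_pred, where a = "\<lambda>zs. zs ! 1"]) (rule tr_proj, simp)
  have 1: "total_rec 2 (\<lambda>xs. rec_nat (xs ! 0) (\<lambda>k r. (\<lambda>zs. zs ! 1 - 1) (k # r # xs)) (xs ! 1))"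
    by (rule tr_rec[where h = "\<lambda>zs. zs ! 1 - 1"]) (rule tr_proj, simp, rule tr_proj, simp, rule h)
  show ?thesis by (rule tr_ext[OF 1]) (simp add: rec_sub[unfolded One_nat_def])
qed

lemma tr_mul2: "total_rec 2 (\<lambda>ys. ys ! 0 * ys ! 1)"
proof -
  have 1: "total_rec 2 (\<lambda>xs. rec_nat ((\<lambda>_. 0) xs) (\<lambda>k r. (\<lambda>zs. zs ! 1 + zs ! 3) (k # r # xs)) (xs ! 0))"
    by (rule tr_rec[where h = "\<lambda>zs. zs ! 1 + zs ! 3"]) (auto intro!: tr_proj tr_const tr_op2[OF tr_add2])
  show ?thesis by (rule tr_ext[OF 1]) (simp add: rec_mul)
qed

lemma tr_cons_drop:
  assumes "total_rec (Suc n) f"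
  shows "total_rec (Suc (Suc n)) (\<lambda>ys. f (ys ! 0 # drop 2 ys))"
proof -
  define G :: "nat \<Rightarrow> nat list \<Rightarrow> nat" where "G i = (if i = 0 then (\<lambda>ys. ys ! 0) else (\<lambda>ys. ys ! (Suc i)))" for i :: nat
  have 1: "total_rec (Suc (Suc n)) (\<lambda>xs. f (map (\<lambda>i. G i xs) [0..<Suc n]))"
    by (rule tr_comp_list[OF assms]) (auto simp: G_def intro: tr_proj)
  show ?thesis
  proof (rule tr_ext[OF 1])
    fix xs :: "nat list" assume "length xs = Suc (Suc n)"
    then show "f (xs ! 0 # drop 2 xs) = f (map (\<lambda>i. G i xs) [0..<Suc n])"
      by (intro arg_cong[where f = f]) (auto simp: list_eq_iff_nth_eq G_def nth_Cons' simp del: upt_Suc)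
  qed
qed

lemma rec_sum: "rec_nat 0 (\<lambda>k r. r + f k) x = (\<Sum>k<x. f k :: nat)" by (induction x) auto

lemma wf_add: assumes "total_rec n (ev a)" "total_rec n (ev b)" shows "total_rec n (ev (Add a b))"
  by (rule tr_ext[OF tr_op2[where op="(+)", OF tr_add2 assms]]) simp
lemma wf_sub: assumes "total_rec n (ev a)" "total_rec n (ev b)" shows "total_rec n (ev (Sub a b))"
  by (rule tr_ext[OF tr_op2[where op="(-)", OF tr_sub2 assms]]) simp
lemma wf_mul: assumes "total_rec n (ev a)" "total_rec n (ev b)" shows "total_rec n (ev (Mul a b))"
  by (rule tr_ext[OF tr_op2[where op="(*)", OF tr_mul2 assms]]) simp
lemma wf_sum: assumes b: "total_rec n (ev b)" and f: "total_rec (Suc n) (ev f)"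
  shows "total_rec n (ev (Sum b f))"
proof -
  have h: "total_rec (Suc (Suc n)) (\<lambda>ys. ys ! 1 + ev f (ys ! 0 # drop 2 ys))"
    by (rule tr_op2[where op="(+)", OF tr_add2 tr_proj tr_cons_drop[OF f]]) simp
  have 1: "total_rec n (\<lambda>xs. rec_nat ((\<lambda>_. 0) xs) (\<lambda>k r. (\<lambda>ys. ys ! 1 + ev f (ys ! 0 # drop 2 ys)) (k # r # xs)) (ev b xs))"
    by (rule tr_rec[OF b tr_const h])
  show ?thesis by (rule tr_ext[OF 1]) (simp add: rec_sum)
qed
lemma wf_rec: assumes "total_rec n (ev a)" "total_rec n (ev g)" "total_rec (Suc (Suc n)) (ev h)" shows "total_rec n (ev (Rec a g h))"
  by (rule tr_ext[OF tr_rec[OF assms]]) simp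
lemma wf_app: assumes f: "total_rec (length as) (ev f)" and as: "\<And>a. a \<in> set as \<Longrightarrow> total_rec n (ev a)"
  shows "total_rec n (ev (App f as))"
proof -
  have 1: "total_rec n (\<lambda>xs. ev f (map (\<lambda>i. ev (as ! i) xs) [0..<length as]))"
    by (rule tr_comp_list[OF f]) (rule as, rule nth_mem)
  have 2: "map (\<lambda>i. ev (as ! i) xs) [0..<length as] = map (\<lambda>a. ev a xs) as" for xs
    by (rule nth_equalityI) auto
  show ?thesis by (rule tr_ext[OF 1]) (simp only: ev.simps 2)
qed
theorem wf_tr: "wfx n e \<Longrightarrow> total_rec n (ev e)"
proof (induction e arbitrary: n)
  case (V i) then have "i < n" by simp
  show ?case by (rule tr_ext[OF tr_proj[OF \<open>i < n\<close>]]) simp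
next
  case (C c) show ?case by (rule tr_ext[OF tr_const[of n c]]) simp
next
  case (Add a b) then have "total_rec n (ev a)" "total_rec n (ev b)" by simp_all
  then show ?case by (rule wf_add)
next
  case (Sub a b) then have "total_rec n (ev a)" "total_rec n (ev b)" by simp_all
  then show ?case by (rule wf_sub)
next
  case (Mul a b) then have "total_rec n (ev a)" "total_rec n (ev b)" by simp_all
  then show ?case by (rule wf_mul)
next
  case (Sum b f) then have "total_rec n (ev b)" "total_rec (Suc n) (ev f)" by simp_all
  then show ?case by (rule wf_sum)
next
  case (Rec a g h) then have "total_rec n (ev a)" "total_rec n (ev g)" "total_rec (Suc (Suc n)) (ev h)" by simp_all
  then show ?case by (rule wf_rec)
next
  case (App f as) then have "total_rec (length as) (ev f)" "\<And>a. a \<in> set as \<Longrightarrow> total_rec n (ev a)" by simp_all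
  then show ?case by (rule wf_app)
next
  case (Fn f) then have "total_rec n f" by simp
  then show ?case by (rule tr_ext) simp
qed


definition "NzX a = Sub (C 1) (Sub (C 1) a)"
definition "NotX a = Sub (C 1) a"
definition "EqX a b = NotX (Add (Sub a b) (Sub b a))"
definition "LtX a b = NzX (Sub b a)"
definition "AndX a b = Mul (NzX a) (NzX b)"
definition "OrX a b = NzX (Add a b)"
definition "ExX b f = NzX (Sum b f)"
definition "AllX b f = NotX (Sum b (NotX f))"
definition "IteX c a b = Add (Mul (NzX c) a) (Mul (NotX c) b)"

lemma ev_NzX[simp]: "ev (NzX a) e = (if ev a e = 0 then 0 else 1)" by (simp add: NzX_def)
lemma ev_NotX[simp]: "ev (NotX a) e = (if ev a e = 0 then 1 else 0)" by (simp add: NotX_def)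

lemma ev_ExX[simp]: "ev (ExX b f) e = (if \<exists>k<ev b e. ev f (k # e) \<noteq> 0 then 1 else 0)"
  unfolding ExX_def ev_NzX ev.simps by (simp add: sum_eq_0_iff)

lemma ev_AllX[simp]: "ev (AllX b f) e = (if \<forall>k<ev b e. ev f (k # e) \<noteq> 0 then 1 else 0)"
  unfolding AllX_def ev_NotX ev.simps by (auto simp: sum_eq_0_iff)

lemma ev_macros[simp]:
  "ev (EqX a b) e = (if ev a e = ev b e then 1 else 0)"
  "ev (LtX a b) e = (if ev a e < ev b e then 1 else 0)"
  "ev (AndX a b) e = (if ev a e \<noteq> 0 \<and> ev b e \<noteq> 0 then 1 else 0)"
  "ev (OrX a b) e = (if ev a e \<noteq> 0 \<or> ev b e \<noteq> 0 then 1 else 0)"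
  "ev (IteX c a b) e = (if ev c e \<noteq> 0 then ev a e else ev b e)"
  by (auto simp: EqX_def LtX_def AndX_def OrX_def IteX_def)

lemma wfx_macros[simp]:
  "wfx n (NzX a) = wfx n a" "wfx n (NotX a) = wfx n a"
  "wfx n (EqX a b) = (wfx n a \<and> wfx n b)" "wfx n (LtX a b) = (wfx n a \<and> wfx n b)"
  "wfx n (AndX a b) = (wfx n a \<and> wfx n b)" "wfx n (OrX a b) = (wfx n a \<and> wfx n b)"
  "wfx n (ExX b f) = (wfx n b \<and> wfx (Suc n) f)" "wfx n (AllX b f) = (wfx n b \<and> wfx (Suc n) f)"
  "wfx n (IteX c a b) = (wfx n c \<and> wfx n a \<and> wfx n b)"
  by (auto simp: NzX_def NotX_def EqX_def LtX_def AndX_def OrX_def ExX_def AllX_def IteX_def)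

definition "TRI = Sum (Add (V 0) (C 1)) (V 0)"
lemma ev_TRI[simp]: "ev TRI [s] = triangle s"
  by (induction s) (auto simp: TRI_def)
lemma wfx_TRI[simp]: "wfx (Suc 0) TRI" by (simp add: TRI_def)

definition "PE = Add (App TRI [Add (V 0) (V 1)]) (V 0)"
lemma ev_PE[simp]: "ev PE [m, n] = prod_encode (m, n)"
  by (simp add: PE_def prod_encode_def)
lemma wfx_PE[simp]: "wfx (Suc (Suc 0)) PE" by (simp add: PE_def)

definition pf :: "nat \<Rightarrow> nat" where "pf z = fst (prod_decode z)"
definition ps :: "nat \<Rightarrow> nat" where "ps z = snd (prod_decode z)"

definition "PF = Sum (Add (V 0) (C 1)) (Mul (V 0) (ExX (Add (V 1) (C 1)) (EqX (App PE [V 1, V 0]) (V 2))))"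
definition "PS = Sum (Add (V 0) (C 1)) (Mul (V 0) (ExX (Add (V 1) (C 1)) (EqX (App PE [V 0, V 1]) (V 2))))"

lemma if10: "((if P then 1 else (0::nat)) \<noteq> 0) = P" by simp

lemma pe_le: "prod_decode z = (a, b) \<Longrightarrow> a \<le> z \<and> b \<le> z"
  by (metis le_prod_encode_1 le_prod_encode_2 prod_decode_inverse)

lemma ev_PF[simp]: "ev PF [z] = pf z"
proof -
  obtain a b where ab: "prod_decode z = (a, b)" by (cases "prod_decode z")
  then have z: "z = prod_encode (a, b)" by (metis prod_decode_inverse)
  have le: "a \<le> z" "b \<le> z" using pe_le[OF ab] by auto
  have key0: "(\<exists>n<Suc z. prod_encode (k, n) = z) \<longleftrightarrow> k = a" for k
    using le z by (auto simp: less_Suc_eq_le)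
  have key: "(\<exists>n<z + 1. (if prod_encode (k, n) = z then 1 else (0::nat)) \<noteq> 0) \<longleftrightarrow> k = a" for k
    unfolding if10 Suc_eq_plus1[symmetric] by (rule key0)
  have "ev PF [z] = (\<Sum>k<z + 1. k * (if \<exists>n<z + 1. (if prod_encode (k, n) = z then 1 else (0::nat)) \<noteq> 0 then 1 else 0))"
    by (simp only: PF_def ev.simps ev_ExX ev_macros ev_PE nth_Cons_0 nth_Cons_Suc list.map One_nat_def numeral_2_eq_2)
  also have "\<dots> = (\<Sum>k<Suc z. if k = a then k else 0)"
    by (rule sum.cong) (simp_all only: key, auto)
  also have "\<dots> = a" using le by (simp add: sum.delta' sum.delta)
  finally show ?thesis by (simp add: pf_def ab)
qed

lemma ev_PS[simp]: "ev PS [z] = ps z"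
proof -
  obtain a b where ab: "prod_decode z = (a, b)" by (cases "prod_decode z")
  then have z: "z = prod_encode (a, b)" by (metis prod_decode_inverse)
  have le: "a \<le> z" "b \<le> z" using pe_le[OF ab] by auto
  have key0: "(\<exists>n<Suc z. prod_encode (n, k) = z) \<longleftrightarrow> k = b" for k
    using le z by (auto simp: less_Suc_eq_le)
  have key: "(\<exists>n<z + 1. (if prod_encode (n, k) = z then 1 else (0::nat)) \<noteq> 0) \<longleftrightarrow> k = b" for k
    unfolding if10 Suc_eq_plus1[symmetric] by (rule key0)
  have "ev PS [z] = (\<Sum>k<z + 1. k * (if \<exists>n<z + 1. (if prod_encode (n, k) = z then 1 else (0::nat)) \<noteq> 0 then 1 else 0))"
    by (simp only: PS_def ev.simps ev_ExX ev_macros ev_PE nth_Cons_0 nth_Cons_Suc list.map One_nat_def numeral_2_eq_2)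
  also have "\<dots> = (\<Sum>k<Suc z. if k = b then k else 0)"
    by (rule sum.cong) (simp_all only: key, auto)
  also have "\<dots> = b" using le by (simp add: sum.delta' sum.delta)
  finally show ?thesis by (simp add: ps_def ab)
qed
lemma wfx_PF[simp]: "wfx (Suc 0) PF" "wfx (Suc 0) PS" by (simp_all add: PF_def PS_def)


lemma prod_decode_0[simp]: "prod_decode 0 = (0, 0)"
  using prod_encode_inverse[of "(0, 0)"] by (simp add: prod_encode_def)
lemma pf0[simp]: "pf 0 = 0" and ps0[simp]: "ps 0 = 0" by (simp_all add: pf_def ps_def)

lemma list_decode_eq_Nil[simp]: "list_decode c = [] \<longleftrightarrow> c = 0"
proof (cases c)
  case (Suc n) then show ?thesis by (cases "prod_decode n") simp
qed simp

lemma length_list_decode_le: "length (list_decode c) \<le> c"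
proof (induction c rule: list_decode.induct)
  case 1 then show ?case by simp
next
  case (2 n)
  obtain x y where xy: "prod_decode n = (x, y)" by (cases "prod_decode n")
  then have "y \<le> n" using pe_le by blast
  with 2 xy show ?case by simp
qed

definition ctl :: "nat \<Rightarrow> nat" where "ctl c = list_encode (tl (list_decode c))"
definition tlk :: "nat \<Rightarrow> nat \<Rightarrow> nat" where "tlk i c = (ctl ^^ i) c"
definition nth0 :: "nat list \<Rightarrow> nat \<Rightarrow> nat" where "nth0 L i = (if i < length L then L ! i else 0)"
definition cnth :: "nat \<Rightarrow> nat \<Rightarrow> nat" where "cnth c i = nth0 (list_decode c) i"
definition clen :: "nat \<Rightarrow> nat" where "clen c = length (list_decode c)"
definition ccons :: "nat \<Rightarrow> nat \<Rightarrow> nat" where "ccons x c = list_encode (x # list_decode c)"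

lemma ctl_ps: "ctl c = ps (c - 1)"
proof (cases c)
  case 0 then show ?thesis by (simp add: ctl_def)
next
  case (Suc n)
  obtain x y where xy: "prod_decode n = (x, y)" by (cases "prod_decode n")
  then show ?thesis using Suc by (simp add: ctl_def ps_def)
qed

lemma list_decode_tlk: "list_decode (tlk i c) = drop i (list_decode c)"
  by (induction i) (simp_all add: tlk_def ctl_def drop_Suc tl_drop)

lemma cnth_pf: "cnth c i = pf (tlk i c - 1)"
proof (cases "tlk i c")
  case 0
  then have "list_decode (tlk i c) = []" by simp
  then have "\<not> i < length (list_decode c)" by (simp add: list_decode_tlk)
  then show ?thesis using 0 by (simp add: cnth_def nth0_def)
next
  case (Suc n)
  obtain x y where xy: "prod_decode n = (x, y)" by (cases "prod_decode n")
  have "drop i (list_decode c) = x # list_decode y"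
    using list_decode_tlk[of i c] Suc xy by simp
  then have i: "i < length (list_decode c)"
    by (metis drop_eq_Nil list.distinct(1) not_le)
  have "list_decode c ! i = x"
    using hd_drop_conv_nth[OF i] \<open>drop i (list_decode c) = x # list_decode y\<close> by simp
  note i this
  then show ?thesis using Suc xy by (simp add: cnth_def nth0_def pf_def)
qed

lemma tlk_ne0: "tlk i c \<noteq> 0 \<longleftrightarrow> i < clen c"
  using list_decode_tlk[of i c] list_decode_eq_Nil[of "tlk i c"] by (auto simp: clen_def)

lemma ccons_pe: "ccons x c = Suc (prod_encode (x, c))"
  by (simp add: ccons_def)

definition "CTL = App PS [Sub (V 0) (C 1)]"
lemma ev_CTL[simp]: "ev CTL [c] = ctl c" by (simp add: CTL_def ctl_ps)
lemma wfx_CTL[simp]: "wfx (Suc 0) CTL" by (simp add: CTL_def)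

definition "TLK = Rec (V 0) (V 1) (App CTL [V 1])"
lemma ev_TLK[simp]: "ev TLK [i, c] = tlk i c"
proof -
  have "rec_nat c (\<lambda>k r. ctl r) i = (ctl ^^ i) c" by (induction i) auto
  then show ?thesis by (simp add: TLK_def tlk_def)
qed
lemma wfx_TLK[simp]: "wfx (Suc (Suc 0)) TLK" by (simp add: TLK_def)

definition "CNTH = App PF [Sub (App TLK [V 1, V 0]) (C 1)]"
lemma ev_CNTH[simp]: "ev CNTH [c, i] = cnth c i" by (simp add: CNTH_def cnth_pf)
lemma wfx_CNTH[simp]: "wfx (Suc (Suc 0)) CNTH" by (simp add: CNTH_def)

definition "CLEN = Sum (V 0) (NzX (App TLK [V 0, V 1]))"
lemma ev_CLEN[simp]: "ev CLEN [c] = clen c"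
proof -
  have "ev CLEN [c] = (\<Sum>i<c. if tlk i c = 0 then 0 else 1)"
    by (simp add: CLEN_def)
  also have "\<dots> = (\<Sum>i<c. if i < clen c then 1 else 0)"
    by (rule sum.cong) (auto simp: tlk_ne0[symmetric])
  also have "\<dots> = card ({..<c} \<inter> {i. i < clen c})"
    by (simp add: sum.If_cases)
  also have "{..<c} \<inter> {i. i < clen c} = {..<clen c}"
    using length_list_decode_le[of c] by (auto simp: clen_def)
  finally show ?thesis by simp
qed
lemma wfx_CLEN[simp]: "wfx (Suc 0) CLEN" by (simp add: CLEN_def)

definition "CCONS = Add (App PE [V 0, V 1]) (C 1)"
lemma ev_CCONS[simp]: "ev CCONS [x, c] = ccons x c" by (simp add: CCONS_def ccons_pe)
lemma wfx_CCONS[simp]: "wfx (Suc (Suc 0)) CCONS" by (simp add: CCONS_def)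

lemma cnth_le[simp]: "cnth (list_encode L) i = nth0 L i" by (simp add: cnth_def)
lemma clen_le[simp]: "clen (list_encode L) = length L" by (simp add: clen_def)
lemma ccons_le[simp]: "ccons x (list_encode L) = list_encode (x # L)" by (simp add: ccons_def)
lemma ctl_le[simp]: "ctl (list_encode L) = list_encode (tl L)" by (simp add: ctl_def)


lemma le_ne0[simp]: "list_encode (a # L) \<noteq> 0" by simp
declare list_encode.simps(2)[simp del]

inductive evl :: "nat \<Rightarrow> nat \<Rightarrow> nat \<Rightarrow> bool" where
  ezero: "cnth p 0 = 0 \<Longrightarrow> evl p x 0"
| esucc: "cnth p 0 = 1 \<Longrightarrow> evl p x (Suc (cnth x 0))"
| eproj: "cnth p 0 = 2 \<Longrightarrow> evl p x (cnth x (cnth p 1))"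
| ecomp: "cnth p 0 = 3 \<Longrightarrow> clen w = clen (cnth p 2) \<Longrightarrow>
    (\<forall>i<clen w. evl (cnth (cnth p 2) i) x (cnth w i)) \<Longrightarrow> evl (cnth p 1) w v \<Longrightarrow> evl p x v"
| eprim0: "cnth p 0 = 4 \<Longrightarrow> x \<noteq> 0 \<Longrightarrow> cnth x 0 = 0 \<Longrightarrow> evl (cnth p 1) (ctl x) v \<Longrightarrow> evl p x v"
| eprimS: "cnth p 0 = 4 \<Longrightarrow> x \<noteq> 0 \<Longrightarrow> cnth x 0 = Suc a \<Longrightarrow> evl p (ccons a (ctl x)) r \<Longrightarrow>
    evl (cnth p 2) (ccons a (ccons r (ctl x))) v \<Longrightarrow> evl p x v"
| emu: "cnth p 0 = 5 \<Longrightarrow> evl (cnth p 1) (ccons v x) 0 \<Longrightarrow>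
    (\<forall>y<v. \<exists>w. w \<noteq> 0 \<and> evl (cnth p 1) (ccons y x) w) \<Longrightarrow> evl p x v"

definition spec :: "nat \<Rightarrow> (nat list \<Rightarrow> nat) \<Rightarrow> nat \<Rightarrow> bool" where
  "spec n f p \<longleftrightarrow> (\<forall>xs. length xs = n \<longrightarrow> (\<forall>v. evl p (list_encode xs) v \<longleftrightarrow> v = f xs))"

lemma spec_zero: "spec n (\<lambda>_. 0) (list_encode [0])"
proof -
  have "evl (list_encode [0]) x v \<longleftrightarrow> v = 0" for x v
  proof
    assume "evl (list_encode [0]) x v" then show "v = 0"
      by (cases rule: evl.cases) (auto simp: nth0_def)
  qed (auto intro: ezero simp: nth0_def)
  then show ?thesis by (simp add: spec_def)
qed

lemma spec_succ: "spec 1 (\<lambda>xs. Suc (hd xs)) (list_encode [1])"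
proof -
  have "evl (list_encode [1]) (list_encode [a]) v \<longleftrightarrow> v = Suc a" for a v
  proof
    assume "evl (list_encode [1]) (list_encode [a]) v" then show "v = Suc a"
      by (cases rule: evl.cases) (auto simp: nth0_def)
  next
    assume "v = Suc a"
    then show "evl (list_encode [1]) (list_encode [a]) v"
      using esucc[of "list_encode [1]" "list_encode [a]"] by (simp add: nth0_def)
  qed
  then show ?thesis by (auto simp: spec_def length_Suc_conv)
qed

lemma spec_proj: "i < n \<Longrightarrow> spec n (\<lambda>xs. xs ! i) (list_encode [2, i])"
proof -
  assume i: "i < n"
  have "evl (list_encode [2, i]) x v \<longleftrightarrow> v = cnth x i" for x v
  proof
    assume "evl (list_encode [2, i]) x v" then show "v = cnth x i"
      by (cases rule: evl.cases) (auto simp: nth0_def)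
  next
    assume "v = cnth x i"
    then show "evl (list_encode [2, i]) x v"
      using eproj[of "list_encode [2, i]" x] by (simp add: nth0_def)
  qed
  then show ?thesis using i by (simp add: spec_def nth0_def)
qed

lemma spec_ext: "spec n f p \<Longrightarrow> (\<forall>xs. length xs = n \<longrightarrow> g xs = f xs) \<Longrightarrow> spec n g p"
  by (simp add: spec_def)


lemma le_eq_iff_decode: "w = list_encode L \<longleftrightarrow> list_decode w = L"
  by auto

lemma spec_comp:
  assumes f: "spec m f qf" and len: "length gs = m"
    and gs: "\<forall>i<m. spec n (gs ! i) (qs ! i)" and lenp: "length qs = m"
  shows "spec n (\<lambda>xs. f (map (\<lambda>g. g xs) gs)) (list_encode [3, qf, list_encode qs])"
  unfolding spec_def
proof (intro allI impI)
  fix xs :: "nat list" and v assume xs: "length xs = n"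
  let ?p = "list_encode [3, qf, list_encode qs]"
  show "evl ?p (list_encode xs) v \<longleftrightarrow> v = f (map (\<lambda>g. g xs) gs)"
  proof
    assume "evl ?p (list_encode xs) v"
    then show "v = f (map (\<lambda>g. g xs) gs)"
    proof (cases rule: evl.cases)
      case (ecomp w)
      define ws where "ws = list_decode w"
      have w: "w = list_encode ws" by (simp add: ws_def)
      have lw: "length ws = m" using ecomp(2) lenp by (simp add: w nth0_def)
      have "ws ! i = (gs ! i) xs" if "i < m" for i
      proof -
        have "evl (qs ! i) (list_encode xs) (ws ! i)"
          using ecomp(3) that lw lenp by (simp add: w nth0_def)
        then show ?thesis using gs that xs by (simp add: spec_def)
      qed
      then have "ws = map (\<lambda>g. g xs) gs" using lw len by (simp add: list_eq_iff_nth_eq)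
      moreover have "evl qf (list_encode ws) v" using ecomp(4) by (simp add: w nth0_def)
      ultimately show ?thesis using f lw by (simp add: spec_def)
    qed (auto simp: nth0_def)
  next
    assume v: "v = f (map (\<lambda>g. g xs) gs)"
    let ?ws = "map (\<lambda>g. g xs) gs"
    have "evl ?p (list_encode xs) v"
    proof (rule ecomp[where w = "list_encode ?ws"])
      show "clen (list_encode ?ws) = clen (cnth ?p 2)" using len lenp by (simp add: nth0_def)
      show "\<forall>i<clen (list_encode ?ws). evl (cnth (cnth ?p 2) i) (list_encode xs) (cnth (list_encode ?ws) i)"
        using gs xs len lenp by (auto simp: nth0_def spec_def)
      show "evl (cnth ?p 1) (list_encode ?ws) v" using f v len by (simp add: nth0_def spec_def)
    qed (simp add: nth0_def)
    then show "evl ?p (list_encode xs) v" .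
  qed
qed


lemma spec_prim:
  assumes g: "spec n g qg" and h: "spec (n + 2) h qh"
  shows "spec (Suc n) (\<lambda>xs. rec_nat (g (tl xs)) (\<lambda>k r. h (k # r # tl xs)) (hd xs)) (list_encode [4, qg, qh])"
proof -
  let ?p = "list_encode [4, qg, qh]"
  have main: "\<forall>v. evl ?p (list_encode (a # rest)) v \<longleftrightarrow> v = rec_nat (g rest) (\<lambda>k r. h (k # r # rest)) a"
    if rest: "length rest = n" for a rest
  proof (induction a)
    case 0
    show ?case
    proof (intro allI iffI)
      fix v assume "evl ?p (list_encode (0 # rest)) v"
      then show "v = rec_nat (g rest) (\<lambda>k r. h (k # r # rest)) 0"
      proof (cases rule: evl.cases)
        case eprim0 then show ?thesis using g rest by (simp add: nth0_def spec_def)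
      qed (auto simp: nth0_def)
    next
      fix v assume v: "v = rec_nat (g rest) (\<lambda>k r. h (k # r # rest)) 0"
      show "evl ?p (list_encode (0 # rest)) v"
        by (rule eprim0) (use v g rest in \<open>auto simp: nth0_def spec_def\<close>)
    qed
  next
    case (Suc a)
    let ?r = "rec_nat (g rest) (\<lambda>k r. h (k # r # rest)) a"
    show ?case
    proof (intro allI iffI)
      fix v assume "evl ?p (list_encode (Suc a # rest)) v"
      then show "v = rec_nat (g rest) (\<lambda>k r. h (k # r # rest)) (Suc a)"
      proof (cases rule: evl.cases)
        case (eprimS a' r)
        then have a': "a' = a" by (simp add: nth0_def)
        have "r = ?r" using eprimS(4) Suc a' by (simp add: nth0_def)
        then show ?thesis using eprimS(5) h rest a' by (simp add: nth0_def spec_def)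
      qed (auto simp: nth0_def)
    next
      fix v assume v: "v = rec_nat (g rest) (\<lambda>k r. h (k # r # rest)) (Suc a)"
      show "evl ?p (list_encode (Suc a # rest)) v"
      proof (rule eprimS[where a = a and r = ?r])
        show "evl ?p (ccons a (ctl (list_encode (Suc a # rest)))) ?r" using Suc by simp
        show "evl (cnth ?p 2) (ccons a (ccons ?r (ctl (list_encode (Suc a # rest))))) v"
          using h rest v by (simp add: nth0_def spec_def)
      qed (auto simp: nth0_def)
    qed
  qed
  show ?thesis unfolding spec_def
  proof (intro allI impI)
    fix xs :: "nat list" and v assume "length xs = Suc n"
    then obtain a rest where "xs = a # rest" "length rest = n" by (cases xs) auto
    then show "evl ?p (list_encode xs) v \<longleftrightarrow> v = rec_nat (g (tl xs)) (\<lambda>k r. h (k # r # tl xs)) (hd xs)"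
      using main by simp
  qed
qed


lemma spec_mu:
  assumes f: "spec (Suc n) f qf" and ex: "\<forall>xs. length xs = n \<longrightarrow> (\<exists>y. f (y # xs) = 0)"
  shows "spec n (\<lambda>xs. LEAST y. f (y # xs) = 0) (list_encode [5, qf])"
  unfolding spec_def
proof (intro allI impI)
  fix xs :: "nat list" and v assume xs: "length xs = n"
  let ?p = "list_encode [5, qf]"
  have ev: "evl qf (list_encode (y # xs)) w \<longleftrightarrow> w = f (y # xs)" for y w
    using f xs by (simp add: spec_def)
  have "evl ?p (list_encode xs) v \<longleftrightarrow> f (v # xs) = 0 \<and> (\<forall>y<v. f (y # xs) \<noteq> 0)"
  proof
    assume "evl ?p (list_encode xs) v"
    then show "f (v # xs) = 0 \<and> (\<forall>y<v. f (y # xs) \<noteq> 0)"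
    proof (cases rule: evl.cases)
      case emu then show ?thesis using ev by (fastforce simp: nth0_def)
    qed (auto simp: nth0_def)
  next
    assume a: "f (v # xs) = 0 \<and> (\<forall>y<v. f (y # xs) \<noteq> 0)"
    show "evl ?p (list_encode xs) v"
      by (rule emu) (use a in \<open>auto simp: nth0_def ev\<close>)
  qed
  also have "\<dots> \<longleftrightarrow> v = (LEAST y. f (y # xs) = 0)"
  proof
    assume "f (v # xs) = 0 \<and> (\<forall>y<v. f (y # xs) \<noteq> 0)"
    then show "v = (LEAST y. f (y # xs) = 0)"
      by (intro Least_equality[symmetric]) (auto simp: not_less[symmetric])
  next
    assume v: "v = (LEAST y. f (y # xs) = 0)"
    obtain y where "f (y # xs) = 0" using ex xs by blast
    then show "f (v # xs) = 0 \<and> (\<forall>y<v. f (y # xs) \<noteq> 0)"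
      unfolding v by (auto intro: LeastI dest: not_less_Least)
  qed
  finally show "evl ?p (list_encode xs) v \<longleftrightarrow> v = (LEAST y. f (y # xs) = 0)" .
qed

theorem total_rec_spec: "total_rec n f \<Longrightarrow> \<exists>p. spec n f p"
proof (induction rule: total_rec.induct)
  case (zero n) then show ?case using spec_zero by blast
next
  case succ then show ?case using spec_succ by blast
next
  case (proj i n) then show ?case using spec_proj by blast
next
  case (comp m f gs n)
  then obtain qf where qf: "spec m f qf" by blast
  have "\<forall>i<m. \<exists>p. spec n (gs ! i) p" using comp by (auto simp: nth_mem)
  then obtain P where P: "\<forall>i<m. spec n (gs ! i) (P i)" by metis
  have "spec n (\<lambda>xs. f (map (\<lambda>g. g xs) gs)) (list_encode [3, qf, list_encode (map P [0..<m])])"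
    by (rule spec_comp[OF qf]) (use comp P in auto)
  then show ?case by blast
next
  case (prim n g h)
  then show ?case using spec_prim by blast
next
  case (mu n f)
  then show ?case using spec_mu by blast
next
  case (ext n f g)
  then show ?case using spec_ext by blast
qed



definition hasf :: "(nat \<Rightarrow> nat) \<Rightarrow> nat \<Rightarrow> nat \<Rightarrow> nat \<Rightarrow> nat \<Rightarrow> bool" where
  "hasf E j p x v \<longleftrightarrow> cnth (E j) 0 = p \<and> cnth (E j) 1 = x \<and> cnth (E j) 2 = v"
definition earlierf :: "(nat \<Rightarrow> nat) \<Rightarrow> nat \<Rightarrow> nat \<Rightarrow> nat \<Rightarrow> nat \<Rightarrow> bool" where
  "earlierf E k p x v \<longleftrightarrow> (\<exists>j<k. hasf E j p x v)"
definition nzf :: "(nat \<Rightarrow> nat) \<Rightarrow> nat \<Rightarrow> nat \<Rightarrow> nat \<Rightarrow> bool" where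
  "nzf E k p x \<longleftrightarrow> (\<exists>j<k. cnth (E j) 0 = p \<and> cnth (E j) 1 = x \<and> cnth (E j) 2 \<noteq> 0)"

definition okr :: "(nat \<Rightarrow> nat) \<Rightarrow> nat \<Rightarrow> nat \<Rightarrow> nat \<Rightarrow> nat \<Rightarrow> nat \<Rightarrow> bool" where
  "okr E k pP xX vV aA \<longleftrightarrow>
    (cnth pP 0 = 0 \<and> vV = 0) \<or>
    (cnth pP 0 = 1 \<and> vV = Suc (cnth xX 0)) \<or>
    (cnth pP 0 = 2 \<and> vV = cnth xX (cnth pP 1)) \<or>
    (cnth pP 0 = 3 \<and> clen aA = clen (cnth pP 2) \<and>
       (\<forall>i<clen aA. earlierf E k (cnth (cnth pP 2) i) xX (cnth aA i)) \<and> earlierf E k (cnth pP 1) aA vV) \<or>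
    (cnth pP 0 = 4 \<and> xX \<noteq> 0 \<and> cnth xX 0 = 0 \<and> earlierf E k (cnth pP 1) (ctl xX) vV) \<or>
    (cnth pP 0 = 4 \<and> xX \<noteq> 0 \<and> cnth xX 0 \<noteq> 0 \<and> earlierf E k pP (ccons (cnth xX 0 - 1) (ctl xX)) aA \<and>
       earlierf E k (cnth pP 2) (ccons (cnth xX 0 - 1) (ccons aA (ctl xX))) vV) \<or>
    (cnth pP 0 = 5 \<and> earlierf E k (cnth pP 1) (ccons vV xX) 0 \<and> (\<forall>y<vV. nzf E k (cnth pP 1) (ccons y xX)))"

definition okf :: "(nat \<Rightarrow> nat) \<Rightarrow> nat \<Rightarrow> bool" where
  "okf E k \<longleftrightarrow> okr E k (cnth (E k) 0) (cnth (E k) 1) (cnth (E k) 2) (cnth (E k) 3)"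

definition validc :: "nat \<Rightarrow> bool" where
  "validc s \<longleftrightarrow> (\<forall>k<clen s. okf (cnth s) k)"

lemma earlierf_mono: "earlierf E k p x v \<Longrightarrow> (\<forall>j<k. \<exists>j'<k'. E' j' = E j) \<Longrightarrow> earlierf E' k' p x v"
  unfolding earlierf_def hasf_def by metis
lemma nzf_mono: "nzf E k p x \<Longrightarrow> (\<forall>j<k. \<exists>j'<k'. E' j' = E j) \<Longrightarrow> nzf E' k' p x"
  unfolding nzf_def by metis

lemma okr_mono: assumes "okr E k pP xX vV aA" "\<forall>j<k. \<exists>j'<k'. E' j' = E j" shows "okr E' k' pP xX vV aA"
proof -
  note m = earlierf_mono[OF _ assms(2)] nzf_mono[OF _ assms(2)]
  show ?thesis using assms(1) unfolding okr_def
    apply (elim disjE)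
    apply (rule disjI1; simp)
    apply (rule disjI2, rule disjI1; simp)
    apply (rule disjI2, rule disjI2, rule disjI1; simp)
    apply (rule disjI2, rule disjI2, rule disjI2, rule disjI1; simp add: m)
    apply (rule disjI2, rule disjI2, rule disjI2, rule disjI2, rule disjI1; simp add: m)
    apply (rule disjI2, rule disjI2, rule disjI2, rule disjI2, rule disjI2, rule disjI1; simp add: m)
    apply (rule disjI2, rule disjI2, rule disjI2, rule disjI2, rule disjI2, rule disjI2; simp add: m)
    done
qed

lemma okf_mono: "okf E k \<Longrightarrow> E' k' = E k \<Longrightarrow> \<forall>j<k. \<exists>j'<k'. E' j' = E j \<Longrightarrow> okf E' k'"
  unfolding okf_def using okr_mono by metis

lemma sound: "validc s \<Longrightarrow> k < clen s \<Longrightarrow> evl (cnth (cnth s k) 0) (cnth (cnth s k) 1) (cnth (cnth s k) 2)"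
proof (induction k rule: less_induct)
  case (less k)
  let ?E = "cnth s"
  have IH: "evl p x v" if "earlierf ?E k p x v" for p x v
    using that less unfolding earlierf_def hasf_def by force
  have IHnz: "\<exists>w. w \<noteq> 0 \<and> evl p x w" if "nzf ?E k p x" for p x
    using that less unfolding nzf_def by force
  have ok: "okr ?E k (cnth (?E k) 0) (cnth (?E k) 1) (cnth (?E k) 2) (cnth (?E k) 3)"
    using less by (simp add: validc_def okf_def)
  then show ?case unfolding okr_def
  proof (elim disjE conjE)
    assume "cnth (cnth (cnth s k) 0) 0 = 0" "cnth (cnth s k) 2 = 0"
    then show ?thesis by (simp add: ezero)
  next
    assume "cnth (cnth (cnth s k) 0) 0 = 1" "cnth (cnth s k) 2 = Suc (cnth (cnth (cnth s k) 1) 0)"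
    then show ?thesis by (simp add: esucc)
  next
    assume "cnth (cnth (cnth s k) 0) 0 = 2" "cnth (cnth s k) 2 = cnth (cnth (cnth s k) 1) (cnth (cnth (cnth s k) 0) 1)"
    then show ?thesis using eproj[of "cnth (cnth s k) 0" "cnth (cnth s k) 1"] by simp
  next
    assume a: "cnth (cnth (cnth s k) 0) 0 = 3"
      "clen (cnth (cnth s k) 3) = clen (cnth (cnth (cnth s k) 0) 2)"
      "\<forall>i<clen (cnth (cnth s k) 3). earlierf ?E k (cnth (cnth (cnth (cnth s k) 0) 2) i) (cnth (cnth s k) 1) (cnth (cnth (cnth s k) 3) i)"
      "earlierf ?E k (cnth (cnth (cnth s k) 0) 1) (cnth (cnth s k) 3) (cnth (cnth s k) 2)"
    show ?thesis by (rule ecomp[OF a(1) a(2)]) (use a IH in auto)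
  next
    assume a: "cnth (cnth (cnth s k) 0) 0 = 4" "cnth (cnth s k) 1 \<noteq> 0" "cnth (cnth (cnth s k) 1) 0 = 0"
      "earlierf ?E k (cnth (cnth (cnth s k) 0) 1) (ctl (cnth (cnth s k) 1)) (cnth (cnth s k) 2)"
    show ?thesis by (rule eprim0[OF a(1-3)]) (use a IH in auto)
  next
    let ?X = "cnth (cnth s k) 1"
    assume a: "cnth (cnth (cnth s k) 0) 0 = 4" "?X \<noteq> 0" "cnth ?X 0 \<noteq> 0"
      "earlierf ?E k (cnth (cnth s k) 0) (ccons (cnth ?X 0 - 1) (ctl ?X)) (cnth (cnth s k) 3)"
      "earlierf ?E k (cnth (cnth (cnth s k) 0) 2) (ccons (cnth ?X 0 - 1) (ccons (cnth (cnth s k) 3) (ctl ?X))) (cnth (cnth s k) 2)"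
    have s: "cnth ?X 0 = Suc (cnth ?X 0 - 1)" using a(3) by simp
    show ?thesis by (rule eprimS[OF a(1,2) s]) (use a IH in auto)
  next
    assume a: "cnth (cnth (cnth s k) 0) 0 = 5"
      "earlierf ?E k (cnth (cnth (cnth s k) 0) 1) (ccons (cnth (cnth s k) 2) (cnth (cnth s k) 1)) 0"
      "\<forall>y<cnth (cnth s k) 2. nzf ?E k (cnth (cnth (cnth s k) 0) 1) (ccons y (cnth (cnth s k) 1))"
    show ?thesis by (rule emu[OF a(1)]) (use a IH IHnz in auto)
  qed
qed


definition validL :: "nat list \<Rightarrow> bool" where "validL L \<longleftrightarrow> (\<forall>k<length L. okf (nth0 L) k)"
definition inL :: "nat list \<Rightarrow> nat \<Rightarrow> nat \<Rightarrow> nat \<Rightarrow> bool" where "inL L p x v \<longleftrightarrow> earlierf (nth0 L) (length L) p x v"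
definition ent :: "nat \<Rightarrow> nat \<Rightarrow> nat \<Rightarrow> nat \<Rightarrow> nat" where "ent p x v a = list_encode [p, x, v, a]"

lemma cnth_ent[simp]: "cnth (ent p x v a) 0 = p" "cnth (ent p x v a) (Suc 0) = x"
  "cnth (ent p x v a) 2 = v" "cnth (ent p x v a) 3 = a"
  by (simp_all add: ent_def nth0_def)

lemma validc_le: "validc (list_encode L) \<longleftrightarrow> validL L"
proof -
  have "cnth (list_encode L) = nth0 L" by (rule HOL.ext) simp
  then show ?thesis by (simp add: validc_def validL_def)
qed

lemma nth0_append: "nth0 (L1 @ L2) i = (if i < length L1 then nth0 L1 i else nth0 L2 (i - length L1))"
  by (auto simp: nth0_def nth_append)

lemma shift1: "\<forall>j<length L1. \<exists>j'<length (L1 @ L2). nth0 (L1 @ L2) j' = nth0 L1 j"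
proof (intro allI impI)
  fix j assume "j < length L1"
  then show "\<exists>j'<length (L1 @ L2). nth0 (L1 @ L2) j' = nth0 L1 j"
    by (intro exI[of _ j]) (simp add: nth0_append)
qed

lemma shift2: "\<forall>j<k2. \<exists>j'<length L1 + k. nth0 (L1 @ L2) j' = nth0 L2 j" if "k2 \<le> k" "k2 \<le> length L2"
proof (intro allI impI)
  fix j assume "j < k2"
  then show "\<exists>j'<length L1 + k. nth0 (L1 @ L2) j' = nth0 L2 j"
    using that by (intro exI[of _ "length L1 + j"]) (simp add: nth0_append)
qed

lemma validL_append: assumes "validL L1" "validL L2" shows "validL (L1 @ L2)"
  unfolding validL_def
proof (intro allI impI)
  fix k assume k: "k < length (L1 @ L2)"
  show "okf (nth0 (L1 @ L2)) k"
  proof (cases "k < length L1")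
    case True
    have "okf (nth0 L1) k" using assms(1) True by (simp add: validL_def)
    then show ?thesis
    proof (rule okf_mono)
      show "nth0 (L1 @ L2) k = nth0 L1 k" using True by (simp add: nth0_append)
      show "\<forall>j<k. \<exists>j'<k. nth0 (L1 @ L2) j' = nth0 L1 j"
      proof (intro allI impI)
        fix j assume "j < k" then show "\<exists>j'<k. nth0 (L1 @ L2) j' = nth0 L1 j"
          using True by (intro exI[of _ j]) (simp add: nth0_append)
      qed
    qed
  next
    case False
    define k2 where "k2 = k - length L1"
    have k2: "k2 < length L2" "k = length L1 + k2" using k False by (auto simp: k2_def)
    have "okf (nth0 L2) k2" using assms(2) k2 by (simp add: validL_def)
    then show ?thesis
    proof (rule okf_mono)
      show "nth0 (L1 @ L2) k = nth0 L2 k2" using k2 by (simp add: nth0_append)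
      show "\<forall>j<k2. \<exists>j'<k. nth0 (L1 @ L2) j' = nth0 L2 j"
        using shift2[of k2 k2 L2 L1] k2 by simp
    qed
  qed
qed

lemma validL_Nil[simp]: "validL []" by (simp add: validL_def)

lemma validL_concat: "\<forall>L\<in>set Ls. validL L \<Longrightarrow> validL (concat Ls)"
  by (induction Ls) (auto intro: validL_append)

lemma inL_append1: "inL L1 p x v \<Longrightarrow> inL (L1 @ L2) p x v"
  unfolding inL_def by (erule earlierf_mono) (rule shift1)

lemma inL_append2: "inL L2 p x v \<Longrightarrow> inL (L1 @ L2) p x v"
  unfolding inL_def by (erule earlierf_mono) (use shift2[of "length L2" "length L2" L2 L1] in simp)

lemma inL_concat: "L \<in> set Ls \<Longrightarrow> inL L p x v \<Longrightarrow> inL (concat Ls) p x v"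
proof (induction Ls)
  case (Cons L' Ls) then show ?case by (auto intro: inL_append1 inL_append2)
qed simp

definition nzL :: "nat list \<Rightarrow> nat \<Rightarrow> nat \<Rightarrow> bool" where "nzL L p x \<longleftrightarrow> nzf (nth0 L) (length L) p x"

lemma inL_nzL: "inL L p x w \<Longrightarrow> w \<noteq> 0 \<Longrightarrow> nzL L p x"
  unfolding inL_def nzL_def earlierf_def hasf_def nzf_def by auto

lemma nzL_append1: "nzL L1 p x \<Longrightarrow> nzL (L1 @ L2) p x"
  unfolding nzL_def by (erule nzf_mono) (rule shift1)
lemma nzL_append2: "nzL L2 p x \<Longrightarrow> nzL (L1 @ L2) p x"
  unfolding nzL_def by (erule nzf_mono) (use shift2[of "length L2" "length L2" L2 L1] in simp)
lemma nzL_concat: "L \<in> set Ls \<Longrightarrow> nzL L p x \<Longrightarrow> nzL (concat Ls) p x"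
proof (induction Ls)
  case (Cons L' Ls) then show ?case by (auto intro: nzL_append1 nzL_append2)
qed simp

lemma okf_prefix: assumes "okf (nth0 L1) k" "k < length L1" shows "okf (nth0 (L1 @ L2)) k"
  using assms(1)
proof (rule okf_mono)
  show "nth0 (L1 @ L2) k = nth0 L1 k" using assms(2) by (simp add: nth0_append)
  show "\<forall>j<k. \<exists>j'<k. nth0 (L1 @ L2) j' = nth0 L1 j"
  proof (intro allI impI)
    fix j assume "j < k" then show "\<exists>j'<k. nth0 (L1 @ L2) j' = nth0 L1 j"
      using assms(2) by (intro exI[of _ j]) (simp add: nth0_append)
  qed
qed

lemma validL_snoc:
  assumes "validL L" "okr (nth0 L) (length L) p x v a"
  shows "validL (L @ [ent p x v a])" "inL (L @ [ent p x v a]) p x v"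
proof -
  let ?e = "ent p x v a"
  have e: "nth0 (L @ [?e]) (length L) = ?e" by (simp add: nth0_append nth0_def)
  have "okr (nth0 (L @ [?e])) (length L) p x v a"
  proof (rule okr_mono[OF assms(2)])
    show "\<forall>j<length L. \<exists>j'<length L. nth0 (L @ [?e]) j' = nth0 L j"
    proof (intro allI impI)
      fix j assume "j < length L" then show "\<exists>j'<length L. nth0 (L @ [?e]) j' = nth0 L j"
        by (intro exI[of _ j]) (simp add: nth0_append)
    qed
  qed
  then have last: "okf (nth0 (L @ [?e])) (length L)" by (simp add: okf_def e)
  show "validL (L @ [?e])" unfolding validL_def
  proof (intro allI impI)
    fix k assume "k < length (L @ [?e])"
    then consider "k < length L" | "k = length L" by fastforce
    then show "okf (nth0 (L @ [?e])) k"
    proof cases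
      case 1 then show ?thesis using okf_prefix assms(1) by (simp add: validL_def)
    next
      case 2 then show ?thesis using last by simp
    qed
  qed
  show "inL (L @ [?e]) p x v"
    unfolding inL_def earlierf_def hasf_def using e by (intro exI[of _ "length L"]) simp
qed

theorem complete: "evl p x v \<Longrightarrow> \<exists>L. validL L \<and> inL L p x v"
proof (induction rule: evl.induct)
  case (ezero p x)
  have "okr (nth0 []) 0 p x 0 0" using ezero by (simp add: okr_def)
  then show ?case using validL_snoc[of "[]" p x 0 0] by auto
next
  case (esucc p x)
  have "okr (nth0 []) 0 p x (Suc (cnth x 0)) 0" using esucc by (simp add: okr_def)
  then show ?case using validL_snoc[of "[]" p x "Suc (cnth x 0)" 0] by auto
next
  case (eproj p x)
  have "okr (nth0 []) 0 p x (cnth x (cnth p 1)) 0" using eproj by (simp add: okr_def)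
  then show ?case using validL_snoc[of "[]" p x "cnth x (cnth p 1)" 0] by auto
next
  case (ecomp p w x v)
  have "\<forall>i. \<exists>L. i < clen w \<longrightarrow> validL L \<and> inL L (cnth (cnth p 2) i) x (cnth w i)"
    using ecomp by blast
  then obtain Lf where Lf: "\<And>i. i < clen w \<Longrightarrow> validL (Lf i) \<and> inL (Lf i) (cnth (cnth p 2) i) x (cnth w i)"
    by metis
  obtain Lc where Lc: "validL Lc" "inL Lc (cnth p 1) w v" using ecomp by blast
  define L where "L = concat (map Lf [0..<clen w]) @ Lc"
  have vL: "validL L" unfolding L_def
    by (intro validL_append validL_concat Lc) (auto dest: Lf)
  have "inL L (cnth (cnth p 2) i) x (cnth w i)" if "i < clen w" for i
    unfolding L_def using that Lf by (intro inL_append1 inL_concat[of "Lf i"]) auto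
  moreover have "inL L (cnth p 1) w v" unfolding L_def using Lc by (intro inL_append2)
  ultimately have "okr (nth0 L) (length L) p x v w"
    unfolding okr_def inL_def using ecomp by simp
  then show ?case using validL_snoc[OF vL] by blast
next
  case (eprim0 p x v)
  obtain L where L: "validL L" "inL L (cnth p 1) (ctl x) v" using eprim0 by blast
  have "okr (nth0 L) (length L) p x v 0" using eprim0 L by (simp add: okr_def inL_def)
  then show ?case using validL_snoc[OF L(1)] by blast
next
  case (eprimS p x a r v)
  obtain L1 where L1: "validL L1" "inL L1 p (ccons a (ctl x)) r" using eprimS by blast
  obtain L2 where L2: "validL L2" "inL L2 (cnth p 2) (ccons a (ccons r (ctl x))) v" using eprimS by blast
  have vL: "validL (L1 @ L2)" using L1 L2 by (simp add: validL_append)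
  have i1: "inL (L1 @ L2) p (ccons a (ctl x)) r" by (rule inL_append1[OF L1(2)])
  have i2: "inL (L1 @ L2) (cnth p 2) (ccons a (ccons r (ctl x))) v" by (rule inL_append2[OF L2(2)])
  have "okr (nth0 (L1 @ L2)) (length (L1 @ L2)) p x v r"
    using eprimS(1-3) i1 i2 unfolding okr_def inL_def by simp
  then show ?case using validL_snoc[OF vL] by blast
next
  case (emu p v x)
  obtain L0 where L0: "validL L0" "inL L0 (cnth p 1) (ccons v x) 0" using emu by blast
  have "\<forall>y. \<exists>L. y < v \<longrightarrow> validL L \<and> nzL L (cnth p 1) (ccons y x)"
    using emu inL_nzL by metis
  then obtain Ly where Ly: "\<And>y. y < v \<Longrightarrow> validL (Ly y) \<and> nzL (Ly y) (cnth p 1) (ccons y x)"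
    by metis
  define L where "L = L0 @ concat (map Ly [0..<v])"
  have vL: "validL L" unfolding L_def
    by (intro validL_append validL_concat L0) (auto dest: Ly)
  have i0: "inL L (cnth p 1) (ccons v x) 0" unfolding L_def by (rule inL_append1[OF L0(2)])
  have "nzL L (cnth p 1) (ccons y x)" if "y < v" for y
    unfolding L_def using that Ly by (intro nzL_append2 nzL_concat[of "Ly y"]) auto
  then have "okr (nth0 L) (length L) p x v 0"
    using emu i0 unfolding okr_def inL_def nzL_def by simp
  then show ?case using validL_snoc[OF vL] by blast
qed


lemma nth_Cons_1[simp]: "(x # xs) ! 1 = xs ! 0" by simp

definition "FLD = App CNTH [App CNTH [V 0, V 1], V 2]"
lemma ev_FLD[simp]: "ev FLD [s, j, i] = cnth (cnth s j) i" by (simp add: FLD_def)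
lemma wfx_FLD[simp]: "wfx (Suc (Suc (Suc 0))) FLD" by (simp add: FLD_def)

definition "EARLIER = ExX (V 1) (AndX (EqX (App FLD [V 1, V 0, C 0]) (V 3))
   (AndX (EqX (App FLD [V 1, V 0, C 1]) (V 4)) (EqX (App FLD [V 1, V 0, C 2]) (V 5))))"
lemma ev_EARLIER[simp]: "ev EARLIER [s, k, p, x, v] = (if earlierf (cnth s) k p x v then 1 else 0)"
  by (auto simp: EARLIER_def earlierf_def hasf_def)
lemma wfx_EARLIER[simp]: "wfx (Suc (Suc (Suc (Suc (Suc 0))))) EARLIER" by (simp add: EARLIER_def)

definition "NZF = ExX (V 1) (AndX (EqX (App FLD [V 1, V 0, C 0]) (V 3))
   (AndX (EqX (App FLD [V 1, V 0, C 1]) (V 4)) (NzX (App FLD [V 1, V 0, C 2]))))"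
lemma ev_NZF[simp]: "ev NZF [s, k, p, x] = (if nzf (cnth s) k p x then 1 else 0)"
  by (auto simp: NZF_def nzf_def)
lemma wfx_NZF[simp]: "wfx (Suc (Suc (Suc (Suc 0)))) NZF" by (simp add: NZF_def)

definition "TAG = App CNTH [V 2, C 0]"
definition "D1 = AndX (EqX TAG (C 0)) (EqX (V 4) (C 0))"
definition "D2 = AndX (EqX TAG (C 1)) (EqX (V 4) (Add (App CNTH [V 3, C 0]) (C 1)))"
definition "D3 = AndX (EqX TAG (C 2)) (EqX (V 4) (App CNTH [V 3, App CNTH [V 2, C 1]]))"
definition "D4 = AndX (EqX TAG (C 3)) (AndX (EqX (App CLEN [V 5]) (App CLEN [App CNTH [V 2, C 2]]))
         (AndX (AllX (App CLEN [V 5]) (App EARLIER [V 1, V 2, App CNTH [App CNTH [V 3, C 2], V 0], V 4, App CNTH [V 6, V 0]]))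
               (App EARLIER [V 0, V 1, App CNTH [V 2, C 1], V 5, V 4])))"
definition "D5 = AndX (EqX TAG (C 4)) (AndX (NzX (V 3)) (AndX (EqX (App CNTH [V 3, C 0]) (C 0))
         (App EARLIER [V 0, V 1, App CNTH [V 2, C 1], App CTL [V 3], V 4])))"
definition "D6 = AndX (EqX TAG (C 4)) (AndX (NzX (V 3)) (AndX (NzX (App CNTH [V 3, C 0]))
         (AndX (App EARLIER [V 0, V 1, V 2, App CCONS [Sub (App CNTH [V 3, C 0]) (C 1), App CTL [V 3]], V 5])
               (App EARLIER [V 0, V 1, App CNTH [V 2, C 2], App CCONS [Sub (App CNTH [V 3, C 0]) (C 1), App CCONS [V 5, App CTL [V 3]]], V 4]))))"
definition "D7 = AndX (EqX TAG (C 5)) (AndX (App EARLIER [V 0, V 1, App CNTH [V 2, C 1], App CCONS [V 4, V 3], C 0])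
         (AllX (V 4) (App NZF [V 1, V 2, App CNTH [V 3, C 1], App CCONS [V 0, V 4]])))"
definition "OKR = OrX D1 (OrX D2 (OrX D3 (OrX D4 (OrX D5 (OrX D6 D7)))))"

lemma okr_alt: "okr E k pP xX vV aA \<longleftrightarrow>
    (cnth pP 0 = 0 \<and> vV = 0) \<or>
    (cnth pP 0 = 1 \<and> vV = Suc (cnth xX 0)) \<or>
    (cnth pP 0 = 2 \<and> vV = cnth xX (cnth pP 1)) \<or>
    (cnth pP 0 = 3 \<and> clen aA = clen (cnth pP 2) \<and>
       (\<forall>i<clen aA. earlierf E k (cnth (cnth pP 2) i) xX (cnth aA i)) \<and> earlierf E k (cnth pP 1) aA vV) \<or>
    (cnth pP 0 = 4 \<and> xX \<noteq> 0 \<and> cnth xX 0 = 0 \<and> earlierf E k (cnth pP 1) (ctl xX) vV) \<or>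
    (cnth pP 0 = 4 \<and> xX \<noteq> 0 \<and> cnth xX 0 \<noteq> 0 \<and> earlierf E k pP (ccons (cnth xX 0 - 1) (ctl xX)) aA \<and>
       earlierf E k (cnth pP 2) (ccons (cnth xX 0 - 1) (ccons aA (ctl xX))) vV) \<or>
    (cnth pP 0 = 5 \<and> earlierf E k (cnth pP 1) (ccons vV xX) 0 \<and> (\<forall>y<vV. nzf E k (cnth pP 1) (ccons y xX)))"
  by (rule okr_def)

lemma ev_D1: "ev D1 [s, k, pP, xX, vV, aA] \<noteq> 0 \<longleftrightarrow> (cnth pP 0 = 0 \<and> vV = 0)" by (auto simp: D1_def TAG_def)
lemma ev_D2: "ev D2 [s, k, pP, xX, vV, aA] \<noteq> 0 \<longleftrightarrow> (cnth pP 0 = 1 \<and> vV = Suc (cnth xX 0))" by (auto simp: D2_def TAG_def)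
lemma ev_D3: "ev D3 [s, k, pP, xX, vV, aA] \<noteq> 0 \<longleftrightarrow> (cnth pP 0 = 2 \<and> vV = cnth xX (cnth pP 1))" by (auto simp: D3_def TAG_def)
lemma ev_D4: "ev D4 [s, k, pP, xX, vV, aA] \<noteq> 0 \<longleftrightarrow> (cnth pP 0 = 3 \<and> clen aA = clen (cnth pP 2) \<and>
       (\<forall>i<clen aA. earlierf (cnth s) k (cnth (cnth pP 2) i) xX (cnth aA i)) \<and> earlierf (cnth s) k (cnth pP 1) aA vV)"
  by (auto simp: D4_def TAG_def)
lemma ev_D5: "ev D5 [s, k, pP, xX, vV, aA] \<noteq> 0 \<longleftrightarrow> (cnth pP 0 = 4 \<and> xX \<noteq> 0 \<and> cnth xX 0 = 0 \<and> earlierf (cnth s) k (cnth pP 1) (ctl xX) vV)"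
  by (auto simp: D5_def TAG_def)
lemma ev_D6: "ev D6 [s, k, pP, xX, vV, aA] \<noteq> 0 \<longleftrightarrow> (cnth pP 0 = 4 \<and> xX \<noteq> 0 \<and> cnth xX 0 \<noteq> 0 \<and> earlierf (cnth s) k pP (ccons (cnth xX 0 - 1) (ctl xX)) aA \<and>
       earlierf (cnth s) k (cnth pP 2) (ccons (cnth xX 0 - 1) (ccons aA (ctl xX))) vV)"
  by (auto simp: D6_def TAG_def)
lemma ev_D7: "ev D7 [s, k, pP, xX, vV, aA] \<noteq> 0 \<longleftrightarrow> (cnth pP 0 = 5 \<and> earlierf (cnth s) k (cnth pP 1) (ccons vV xX) 0 \<and> (\<forall>y<vV. nzf (cnth s) k (cnth pP 1) (ccons y xX)))"
  by (auto simp: D7_def TAG_def)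

lemma ev_OKR[simp]: "ev OKR [s, k, pP, xX, vV, aA] = (if okr (cnth s) k pP xX vV aA then 1 else 0)"
proof -
  have "ev OKR [s, k, pP, xX, vV, aA] = (if ev D1 [s, k, pP, xX, vV, aA] \<noteq> 0 \<or> ev D2 [s, k, pP, xX, vV, aA] \<noteq> 0 \<or>
     ev D3 [s, k, pP, xX, vV, aA] \<noteq> 0 \<or> ev D4 [s, k, pP, xX, vV, aA] \<noteq> 0 \<or> ev D5 [s, k, pP, xX, vV, aA] \<noteq> 0 \<or>
     ev D6 [s, k, pP, xX, vV, aA] \<noteq> 0 \<or> ev D7 [s, k, pP, xX, vV, aA] \<noteq> 0 then 1 else 0)"
    unfolding OKR_def ev_macros by simp
  then show ?thesis unfolding ev_D1 ev_D2 ev_D3 ev_D4 ev_D5 ev_D6 ev_D7 okr_alt[of "cnth s"] .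
qed
lemma wfx_OKR[simp]: "wfx (Suc (Suc (Suc (Suc (Suc (Suc 0)))))) OKR"
  by (simp add: OKR_def D1_def D2_def D3_def D4_def D5_def D6_def D7_def TAG_def)

definition "VALID = AllX (App CLEN [V 0]) (App OKR [V 1, V 0, App FLD [V 1, V 0, C 0], App FLD [V 1, V 0, C 1],
   App FLD [V 1, V 0, C 2], App FLD [V 1, V 0, C 3]])"
lemma ev_VALID[simp]: "ev VALID [s] = (if validc s then 1 else 0)"
  by (auto simp: VALID_def validc_def okf_def)
lemma wfx_VALID[simp]: "wfx (Suc 0) VALID" by (simp add: VALID_def)

definition Tpred :: "nat \<Rightarrow> nat \<Rightarrow> nat \<Rightarrow> bool" where
  "Tpred e x w \<longleftrightarrow> validc (ps w) \<and> (\<exists>k<clen (ps w). cnth (cnth (ps w) k) 0 = e \<and>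
      cnth (cnth (ps w) k) 1 = ccons (pf w) (ccons x 0) \<and> cnth (cnth (ps w) k) 2 \<noteq> 0)"

definition "TP = AndX (App VALID [App PS [V 2]]) (ExX (App CLEN [App PS [V 2]])
  (AndX (EqX (App FLD [App PS [V 3], V 0, C 0]) (V 1))
  (AndX (EqX (App FLD [App PS [V 3], V 0, C 1]) (App CCONS [App PF [V 3], App CCONS [V 2, C 0]]))
        (NzX (App FLD [App PS [V 3], V 0, C 2])))))"
lemma ev_TP[simp]: "ev TP [e, x, w] = (if Tpred e x w then 1 else 0)"
  by (auto simp: TP_def Tpred_def)
lemma wfx_TP[simp]: "wfx (Suc (Suc (Suc 0))) TP" by (simp add: TP_def)


definition U1 :: "nat \<Rightarrow> nat \<Rightarrow> bool" where "U1 e x \<longleftrightarrow> (\<exists>w. Tpred e x w)"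

lemma ccons_pair: "ccons y (ccons x 0) = list_encode [y, x]"
proof -
  have "ccons x 0 = list_encode [x]" using ccons_le[of x "[]"] by simp
  then show ?thesis using ccons_le[of y "[x]"] by simp
qed

theorem univ1:
  assumes "total_rec 2 f"
  shows "\<exists>e. \<forall>x. (\<exists>y. f [y, x] \<noteq> 0) \<longleftrightarrow> U1 e x"
proof -
  obtain p where p: "spec 2 f p" using total_rec_spec[OF assms] by blast
  have ev: "evl p (list_encode [y, x]) v \<longleftrightarrow> v = f [y, x]" for y x v
    using p by (simp add: spec_def)
  have "(\<exists>y. f [y, x] \<noteq> 0) \<longleftrightarrow> U1 p x" for x
  proof
    assume "\<exists>y. f [y, x] \<noteq> 0"
    then obtain y where y: "f [y, x] \<noteq> 0" by blast
    have "evl p (list_encode [y, x]) (f [y, x])" using ev by simp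
    then obtain L where L: "validL L" "inL L p (list_encode [y, x]) (f [y, x])" using complete by blast
    define w where "w = prod_encode (y, list_encode L)"
    have pw: "ps w = list_encode L" "pf w = y" by (simp_all add: w_def ps_def pf_def)
    obtain k where k: "k < length L" "hasf (nth0 L) k p (list_encode [y, x]) (f [y, x])"
      using L(2) by (auto simp: inL_def earlierf_def)
    have "Tpred p x w" unfolding Tpred_def pw
      using L(1) k y by (auto simp: validc_le ccons_pair hasf_def intro!: exI[of _ k])
    then show "U1 p x" by (auto simp: U1_def)
  next
    assume "U1 p x"
    then obtain w where "Tpred p x w" by (auto simp: U1_def)
    then obtain k where k: "validc (ps w)" "k < clen (ps w)" "cnth (cnth (ps w) k) 0 = p"
      "cnth (cnth (ps w) k) 1 = list_encode [pf w, x]" "cnth (cnth (ps w) k) 2 \<noteq> 0"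
      by (auto simp: Tpred_def ccons_pair)
    have "evl (cnth (cnth (ps w) k) 0) (cnth (cnth (ps w) k) 1) (cnth (cnth (ps w) k) 2)"
      using sound k(1,2) .
    then have "cnth (cnth (ps w) k) 2 = f [pf w, x]" using k(3,4) ev by simp
    then show "\<exists>y. f [y, x] \<noteq> 0" using k(5) by auto
  qed
  then show ?thesis by blast
qed


lemma dec_iff: "decidable_rel n R \<longleftrightarrow> (\<exists>e. wfx n e \<and> (\<forall>xs. length xs = n \<longrightarrow> (R xs \<longleftrightarrow> ev e xs \<noteq> 0)))"
proof
  assume "decidable_rel n R"
  then obtain f where f: "total_rec n f" "\<forall>xs. length xs = n \<longrightarrow> (R xs \<longleftrightarrow> f xs = 0)"
    by (auto simp: decidable_rel_def)
  then show "\<exists>e. wfx n e \<and> (\<forall>xs. length xs = n \<longrightarrow> (R xs \<longleftrightarrow> ev e xs \<noteq> 0))"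
    by (intro exI[of _ "NotX (Fn f)"]) auto
next
  assume "\<exists>e. wfx n e \<and> (\<forall>xs. length xs = n \<longrightarrow> (R xs \<longleftrightarrow> ev e xs \<noteq> 0))"
  then obtain e where e: "wfx n e" "\<forall>xs. length xs = n \<longrightarrow> (R xs \<longleftrightarrow> ev e xs \<noteq> 0)" by blast
  have "total_rec n (ev (NotX e))" using e(1) by (intro wf_tr) simp
  then show "decidable_rel n R" unfolding decidable_rel_def using e(2)
    by (intro exI[of _ "ev (NotX e)"]) auto
qed

lemma decI: "wfx n e \<Longrightarrow> (\<And>xs. length xs = n \<Longrightarrow> R xs \<longleftrightarrow> ev e xs \<noteq> 0) \<Longrightarrow> decidable_rel n R"
  unfolding dec_iff by blast

lemma sigma_ext: "sigma_rel q n R \<Longrightarrow> (\<And>xs. length xs = n \<Longrightarrow> R' xs = R xs) \<Longrightarrow> sigma_rel q n R'"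
proof (cases q)
  case 0
  assume "sigma_rel q n R" "\<And>xs. length xs = n \<Longrightarrow> R' xs = R xs"
  then show ?thesis using 0 by (auto simp: dec_iff)
next
  case (Suc q')
  assume "sigma_rel q n R" "\<And>xs. length xs = n \<Longrightarrow> R' xs = R xs"
  then show ?thesis using Suc by auto
qed

definition shiftx :: "nat \<Rightarrow> ex \<Rightarrow> ex" where "shiftx n g = App g (map V [1..<Suc n])"

lemma ev_shiftx[simp]: "length xs = n \<Longrightarrow> ev (shiftx n g) (y # xs) = ev g xs"
proof -
  assume l: "length xs = n"
  have "map (\<lambda>a. ev a (y # xs)) (map V [1..<Suc n]) = xs"
    using l by (intro nth_equalityI) (auto simp: nth_Cons' simp del: upt_Suc)
  then show ?thesis by (simp add: shiftx_def)
qed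

lemma wfx_shiftx[simp]: "wfx (Suc n) (shiftx n g) = wfx n g"
  by (auto simp: shiftx_def simp del: upt_Suc)

lemma sigma_subst:
  "sigma_rel q m Q \<Longrightarrow> length gs = m \<Longrightarrow> \<forall>g\<in>set gs. wfx n g \<Longrightarrow>
   sigma_rel q n (\<lambda>xs. Q (map (\<lambda>g. ev g xs) gs))"
proof (induction q arbitrary: n m Q gs)
  case 0
  then obtain e where e: "wfx m e" "\<forall>xs. length xs = m \<longrightarrow> (Q xs \<longleftrightarrow> ev e xs \<noteq> 0)"
    by (auto simp: dec_iff)
  show ?case unfolding sigma_rel.simps
    by (rule decI[where e = "App e gs"]) (use 0 e in auto)
next
  case (Suc q)
  then obtain Q' where Q': "sigma_rel q (Suc m) Q'" "\<forall>ys. length ys = m \<longrightarrow> (Q ys \<longleftrightarrow> (\<exists>y. \<not> Q' (y # ys)))"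
    by auto
  let ?gs = "V 0 # map (shiftx n) gs"
  have "sigma_rel q (Suc n) (\<lambda>xs. Q' (map (\<lambda>g. ev g xs) ?gs))"
    by (rule Suc.IH[OF Q'(1)]) (use Suc.prems in auto)
  moreover have "map (\<lambda>g. ev g (y # xs)) ?gs = y # map (\<lambda>g. ev g xs) gs" if "length xs = n" for y xs
    using that by simp
  ultimately show ?case unfolding sigma_rel.simps
    by (intro exI[of _ "\<lambda>xs. Q' (map (\<lambda>g. ev g xs) ?gs)"] conjI allI impI)
       (simp_all only: Q'(2) Suc.prems(2) length_map)
qed


lemma dec_shift: "decidable_rel n D \<Longrightarrow> decidable_rel (Suc n) (\<lambda>xs. D (tl xs))"
proof -
  assume "decidable_rel n D"
  then obtain e where e: "wfx n e" "\<forall>xs. length xs = n \<longrightarrow> (D xs \<longleftrightarrow> ev e xs \<noteq> 0)" by (auto simp: dec_iff)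
  show ?thesis
  proof (rule decI[where e = "shiftx n e"])
    show "wfx (Suc n) (shiftx n e)" using e by simp
    fix xs :: "nat list" assume "length xs = Suc n"
    then obtain y ys where "xs = y # ys" "length ys = n" by (cases xs) auto
    then show "D (tl xs) \<longleftrightarrow> ev (shiftx n e) xs \<noteq> 0" using e by simp
  qed
qed

lemma dec_not: "decidable_rel n D \<Longrightarrow> decidable_rel n (\<lambda>xs. \<not> D xs)"
  unfolding dec_iff by (metis ev_NotX wfx_macros(2) zero_neq_one)

lemma dec_or: "decidable_rel n D \<Longrightarrow> decidable_rel n E \<Longrightarrow> decidable_rel n (\<lambda>xs. D xs \<or> E xs)"
proof -
  assume "decidable_rel n D" "decidable_rel n E"
  then obtain d e where d: "wfx n d" "\<forall>xs. length xs = n \<longrightarrow> (D xs \<longleftrightarrow> ev d xs \<noteq> 0)"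
    and e: "wfx n e" "\<forall>xs. length xs = n \<longrightarrow> (E xs \<longleftrightarrow> ev e xs \<noteq> 0)" by (auto simp: dec_iff)
  show ?thesis by (rule decI[where e = "OrX d e"]) (use d e in auto)
qed

lemma dec_and: "decidable_rel n D \<Longrightarrow> decidable_rel n E \<Longrightarrow> decidable_rel n (\<lambda>xs. D xs \<and> E xs)"
proof -
  assume "decidable_rel n D" "decidable_rel n E"
  then obtain d e where d: "wfx n d" "\<forall>xs. length xs = n \<longrightarrow> (D xs \<longleftrightarrow> ev d xs \<noteq> 0)"
    and e: "wfx n e" "\<forall>xs. length xs = n \<longrightarrow> (E xs \<longleftrightarrow> ev e xs \<noteq> 0)" by (auto simp: dec_iff)
  show ?thesis by (rule decI[where e = "AndX d e"]) (use d e in auto)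
qed

lemma sigma_or_and:
  "sigma_rel q n R \<Longrightarrow> decidable_rel n D \<Longrightarrow>
    sigma_rel q n (\<lambda>xs. R xs \<or> D xs) \<and> sigma_rel q n (\<lambda>xs. R xs \<and> D xs)"
proof (induction q arbitrary: n R D)
  case 0 then show ?case by (simp add: dec_or dec_and)
next
  case (Suc q)
  then obtain Q where Q: "sigma_rel q (Suc n) Q" "\<forall>xs. length xs = n \<longrightarrow> (R xs \<longleftrightarrow> (\<exists>y. \<not> Q (y # xs)))"
    by auto
  have nD: "decidable_rel (Suc n) (\<lambda>xs. \<not> D (tl xs))" using dec_not[OF dec_shift[OF Suc.prems(2)]] .
  have D: "decidable_rel (Suc n) (\<lambda>xs. D (tl xs))" using dec_shift[OF Suc.prems(2)] .
  have a: "sigma_rel q (Suc n) (\<lambda>xs. Q xs \<and> \<not> D (tl xs))" using Suc.IH[OF Q(1) nD] by blast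
  have b: "sigma_rel q (Suc n) (\<lambda>xs. Q xs \<or> \<not> D (tl xs))" using Suc.IH[OF Q(1) nD] by blast
  show ?case
  proof
    show "sigma_rel (Suc q) n (\<lambda>xs. R xs \<or> D xs)" unfolding sigma_rel.simps
      by (rule exI[of _ "\<lambda>xs. Q xs \<and> \<not> D (tl xs)"]) (use a Q(2) in auto)
    show "sigma_rel (Suc q) n (\<lambda>xs. R xs \<and> D xs)" unfolding sigma_rel.simps
      by (rule exI[of _ "\<lambda>xs. Q xs \<or> \<not> D (tl xs)"]) (use b Q(2) in auto)
  qed
qed

lemma sigma_or: "sigma_rel q n R \<Longrightarrow> decidable_rel n D \<Longrightarrow> sigma_rel q n (\<lambda>xs. R xs \<or> D xs)"
  using sigma_or_and by blast
lemma sigma_and: "sigma_rel q n R \<Longrightarrow> decidable_rel n D \<Longrightarrow> sigma_rel q n (\<lambda>xs. R xs \<and> D xs)"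
  using sigma_or_and by blast

lemma sigma_lift: "sigma_rel q n R \<Longrightarrow> sigma_rel (Suc q) n R"
proof (induction q arbitrary: n R)
  case 0
  have "decidable_rel (Suc n) (\<lambda>xs. \<not> R (tl xs))" using dec_not[OF dec_shift] 0 by simp
  then show ?case unfolding sigma_rel.simps
    by (intro exI[of _ "\<lambda>xs. \<not> R (tl xs)"]) auto
next
  case (Suc q)
  then obtain Q where Q: "sigma_rel q (Suc n) Q" "\<forall>xs. length xs = n \<longrightarrow> (R xs \<longleftrightarrow> (\<exists>y. \<not> Q (y # xs)))"
    by auto
  show ?case using Suc.IH[OF Q(1)] Q(2) by (metis sigma_rel.simps(2))
qed

lemma sigma_lift_le: "sigma_rel q n R \<Longrightarrow> q \<le> p \<Longrightarrow> sigma_rel p n R"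
proof (induction p)
  case (Suc p) then show ?case by (metis le_Suc_eq sigma_lift)
qed simp

lemma sigma_bex:
  "sigma_rel q (Suc n) Q \<Longrightarrow> wfx n b \<Longrightarrow> sigma_rel q n (\<lambda>xs. \<exists>k<ev b xs. Q (k # xs))"
proof (induction q arbitrary: n Q b)
  case 0
  then obtain e where e: "wfx (Suc n) e" "\<forall>xs. length xs = Suc n \<longrightarrow> (Q xs \<longleftrightarrow> ev e xs \<noteq> 0)"
    by (auto simp: dec_iff)
  show ?case unfolding sigma_rel.simps
    by (rule decI[where e = "ExX b e"]) (use 0 e in auto)
next
  case (Suc q)
  then obtain Q' where Q': "sigma_rel q (Suc (Suc n)) Q'"
    "\<forall>xs. length xs = Suc n \<longrightarrow> (Q xs \<longleftrightarrow> (\<exists>y. \<not> Q' (y # xs)))"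
    by auto
  let ?gs = "App PS [V 0] # App PF [V 0] # map (\<lambda>i. V (Suc i)) [0..<n]"
  have ev_gs: "map (\<lambda>g. ev g (w # xs)) ?gs = ps w # pf w # xs" if "length xs = n" for w xs
    using that by (auto intro!: nth_equalityI)
  have s1: "sigma_rel q (Suc n) (\<lambda>xs. Q' (map (\<lambda>g. ev g xs) ?gs))"
    by (rule sigma_subst[OF Q'(1)]) auto
  have d1: "decidable_rel (Suc n) (\<lambda>xs. \<not> pf (hd xs) < ev b (tl xs))"
  proof (rule decI[where e = "NotX (LtX (App PF [V 0]) (shiftx n b))"])
    show "wfx (Suc n) (NotX (LtX (App PF [V 0]) (shiftx n b)))" using Suc.prems by simp
    fix xs :: "nat list" assume "length xs = Suc n"
    then obtain y ys where "xs = y # ys" "length ys = n" by (cases xs) auto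
    then show "(\<not> pf (hd xs) < ev b (tl xs)) \<longleftrightarrow> ev (NotX (LtX (App PF [V 0]) (shiftx n b))) xs \<noteq> 0" by simp
  qed
  have s2: "sigma_rel q (Suc n) (\<lambda>xs. Q' (map (\<lambda>g. ev g xs) ?gs) \<or> \<not> pf (hd xs) < ev b (tl xs))"
    by (rule sigma_or[OF s1 d1])
  have eq: "(\<exists>k<ev b xs. Q (k # xs)) \<longleftrightarrow>
      (\<exists>w. \<not> (Q' (map (\<lambda>g. ev g (w # xs)) ?gs) \<or> \<not> pf (hd (w # xs)) < ev b (tl (w # xs))))"
    if xs: "length xs = n" for xs
  proof -
    have "(\<exists>k<ev b xs. Q (k # xs)) \<longleftrightarrow> (\<exists>k<ev b xs. \<exists>y. \<not> Q' (y # k # xs))"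
      using Q'(2) xs by simp
    also have "\<dots> \<longleftrightarrow> (\<exists>w. pf w < ev b xs \<and> \<not> Q' (ps w # pf w # xs))"
    proof
      assume "\<exists>k<ev b xs. \<exists>y. \<not> Q' (y # k # xs)"
      then obtain k y where "k < ev b xs" "\<not> Q' (y # k # xs)" by blast
      then show "\<exists>w. pf w < ev b xs \<and> \<not> Q' (ps w # pf w # xs)"
        by (intro exI[of _ "prod_encode (k, y)"]) (simp add: pf_def ps_def)
    qed blast
    finally show ?thesis using ev_gs[OF xs] by (simp add: conj_commute)
  qed
  show ?case unfolding sigma_rel.simps
    by (rule exI[of _ "\<lambda>xs. Q' (map (\<lambda>g. ev g xs) ?gs) \<or> \<not> pf (hd xs) < ev b (tl xs)"])
       (use s2 eq in simp)
qed


fun Uf :: "nat \<Rightarrow> nat \<Rightarrow> nat \<Rightarrow> bool" where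
  "Uf 0 e x = U1 e x"
| "Uf (Suc q) e x = (\<exists>y. \<not> Uf q e (prod_encode (y, x)))"

lemma pf_pe[simp]: "pf (prod_encode (a, b)) = a" and ps_pe[simp]: "ps (prod_encode (a, b)) = b"
  by (simp_all add: pf_def ps_def)
lemma pe_pf_ps[simp]: "prod_encode (pf c, ps c) = c"
  by (simp add: pf_def ps_def)

lemma Uf_sigma: "sigma_rel (Suc q) 2 (\<lambda>xs. Uf q (xs ! 0) (xs ! 1))"
proof (induction q)
  case 0
  have d: "decidable_rel 3 (\<lambda>xs. \<not> Tpred (xs ! 1) (xs ! 2) (xs ! 0))"
    by (rule decI[where e = "NotX (App TP [V 1, V 2, V 0])"]) (auto simp: numeral_eq_Suc)
  show ?case unfolding sigma_rel.simps
    by (rule exI[of _ "\<lambda>xs. \<not> Tpred (xs ! 1) (xs ! 2) (xs ! 0)"])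
       (use d in \<open>auto simp: U1_def numeral_eq_Suc\<close>)
next
  case (Suc q)
  have s: "sigma_rel (Suc q) 3 (\<lambda>xs. (\<lambda>ys. Uf q (ys ! 0) (ys ! 1)) (map (\<lambda>g. ev g xs) [V 1, App PE [V 0, V 2]]))"
    by (rule sigma_subst[OF Suc.IH]) (auto simp: numeral_eq_Suc)
  show ?case unfolding sigma_rel.simps(2)[of "Suc q"]
    by (rule exI[of _ "\<lambda>xs. (\<lambda>ys. Uf q (ys ! 0) (ys ! 1)) (map (\<lambda>g. ev g xs) [V 1, App PE [V 0, V 2]])"])
       (use s in \<open>auto simp: numeral_eq_Suc\<close>)
qed

lemma Uf_univ: "sigma_rel (Suc q) 1 S \<Longrightarrow> \<exists>e. \<forall>x. S [x] \<longleftrightarrow> Uf q e x"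
proof (induction q arbitrary: S)
  case 0
  then obtain Q where Q: "decidable_rel 2 Q" "\<forall>xs. length xs = 1 \<longrightarrow> (S xs \<longleftrightarrow> (\<exists>y. \<not> Q (y # xs)))"
    by (auto simp: numeral_eq_Suc)
  then obtain f where f: "total_rec 2 f" "\<forall>xs. length xs = 2 \<longrightarrow> (Q xs \<longleftrightarrow> f xs = 0)"
    by (auto simp: decidable_rel_def)
  obtain e where e: "\<forall>x. (\<exists>y. f [y, x] \<noteq> 0) \<longleftrightarrow> U1 e x" using univ1[OF f(1)] by blast
  have "S [x] \<longleftrightarrow> Uf 0 e x" for x using Q(2) f(2) e by simp
  then show ?case by blast
next
  case (Suc q)
  then obtain Q where Q: "sigma_rel (Suc q) 2 Q" "\<forall>xs. length xs = 1 \<longrightarrow> (S xs \<longleftrightarrow> (\<exists>y. \<not> Q (y # xs)))"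
    by (auto simp: numeral_eq_Suc)
  have s: "sigma_rel (Suc q) 1 (\<lambda>xs. Q (map (\<lambda>g. ev g xs) [App PF [V 0], App PS [V 0]]))"
    by (rule sigma_subst[OF Q(1)]) auto
  obtain e where e: "\<forall>c. Q (map (\<lambda>g. ev g [c]) [App PF [V 0], App PS [V 0]]) \<longleftrightarrow> Uf q e c"
    using Suc.IH[OF s] by blast
  have "S [x] \<longleftrightarrow> Uf (Suc q) e x" for x
  proof -
    have "S [x] \<longleftrightarrow> (\<exists>y. \<not> Q [y, x])" using Q(2) by simp
    also have "\<dots> \<longleftrightarrow> (\<exists>y. \<not> Uf q e (prod_encode (y, x)))"
      using e[rule_format, of "prod_encode (_, x)"] by simp
    finally show ?thesis by simp
  qed
  then show ?case by blast
qed

definition K :: "nat \<Rightarrow> bool" where "K x \<longleftrightarrow> U1 x x"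

lemma K_undec: "\<not> decidable_rel 1 (\<lambda>xs. K (xs ! 0))"
proof
  assume d: "decidable_rel 1 (\<lambda>xs. K (xs ! 0))"
  have d2: "decidable_rel 2 (\<lambda>xs. K (tl xs ! 0))" using dec_shift[OF d] by (simp add: numeral_eq_Suc)
  have s1: "sigma_rel (Suc 0) 1 (\<lambda>xs. \<not> K (xs ! 0))" unfolding sigma_rel.simps
    by (rule exI[of _ "\<lambda>xs. K (tl xs ! 0)"]) (use d2 in \<open>auto simp: numeral_eq_Suc\<close>)
  obtain e where "\<forall>x. (\<not> K ([x] ! 0)) \<longleftrightarrow> Uf 0 e x" using Uf_univ[OF s1] by blast
  then have "\<not> K e \<longleftrightarrow> U1 e e" by simp
  then show False by (simp add: K_def)
qed


definition Lb :: "nat \<Rightarrow> nat" where "Lb b = clen (ps b)"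
definition Grb :: "nat \<Rightarrow> nat \<Rightarrow> nat \<Rightarrow> nat \<Rightarrow> bool" where
  "Grb q b j j' \<longleftrightarrow> Uf q (pf b) (prod_encode (cnth (ps b) j, cnth (ps b) j')) \<or>
                    Uf q (pf b) (prod_encode (cnth (ps b) j', cnth (ps b) j))"

fun chainb :: "nat \<Rightarrow> nat \<Rightarrow> nat list \<Rightarrow> bool" where
  "chainb q b [] = False"
| "chainb q b [a] = (a < Lb b)"
| "chainb q b (a # c # r) = (a < Lb b \<and> Grb q b a c \<and> chainb q b (c # r))"

definition reachb :: "nat \<Rightarrow> nat \<Rightarrow> nat \<Rightarrow> nat \<Rightarrow> bool" where
  "reachb q b i i' \<longleftrightarrow> (\<exists>\<pi>. chainb q b \<pi> \<and> hd \<pi> = i \<and> last \<pi> = i')"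

definition Erel :: "nat \<Rightarrow> nat \<Rightarrow> nat \<Rightarrow> bool" where
  "Erel q z z' \<longleftrightarrow> z = z' \<or> (pf z = pf z' \<and> reachb q (pf z) (ps z) (ps z'))"

lemma Grb_sym: "Grb q b j j' \<longleftrightarrow> Grb q b j' j" by (auto simp: Grb_def)

lemma chainb_set: "chainb q b \<pi> \<Longrightarrow> a \<in> set \<pi> \<Longrightarrow> a < Lb b"
  by (induction q b \<pi> rule: chainb.induct) auto

lemma chainb_app: "chainb q b \<pi>1 \<Longrightarrow> chainb q b \<pi>2 \<Longrightarrow> last \<pi>1 = hd \<pi>2 \<Longrightarrow> chainb q b (\<pi>1 @ tl \<pi>2)"
proof (induction q b \<pi>1 rule: chainb.induct)
  case (2 q b a)
  then show ?case by (cases \<pi>2) auto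
next
  case (3 q b a c r)
  then show ?case by (cases r) auto
qed simp

lemma chainb_snoc: "chainb q b \<pi> \<Longrightarrow> Grb q b (last \<pi>) a \<Longrightarrow> a < Lb b \<Longrightarrow> chainb q b (\<pi> @ [a])"
  using chainb_app[of q b \<pi> "[last \<pi>, a]"] chainb_set[of q b \<pi> "last \<pi>"]
  by (cases \<pi>) auto

lemma chainb_rev: "chainb q b \<pi> \<Longrightarrow> chainb q b (rev \<pi>)"
proof (induction q b \<pi> rule: chainb.induct)
  case (3 q b a c r)
  then have "chainb q b (rev (c # r))" by simp
  moreover have "last (rev (c # r)) = c" by simp
  ultimately show ?case using 3 chainb_snoc[of q b "rev (c # r)" a] by (simp add: Grb_sym)
qed auto

lemma reachb_sym: "reachb q b i i' \<Longrightarrow> reachb q b i' i"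
  unfolding reachb_def
proof (elim exE conjE)
  fix \<pi> assume "chainb q b \<pi>" "hd \<pi> = i" "last \<pi> = i'"
  moreover have "\<pi> \<noteq> []" using \<open>chainb q b \<pi>\<close> by auto
  ultimately show "\<exists>\<pi>. chainb q b \<pi> \<and> hd \<pi> = i' \<and> last \<pi> = i"
    by (intro exI[of _ "rev \<pi>"]) (simp add: chainb_rev hd_rev last_rev)
qed

lemma chainb_ne: "chainb q b \<pi> \<Longrightarrow> \<pi> \<noteq> []" by auto

lemma last_app_tl: "\<pi>1 \<noteq> [] \<Longrightarrow> \<pi>2 \<noteq> [] \<Longrightarrow> last \<pi>1 = hd \<pi>2 \<Longrightarrow> last (\<pi>1 @ tl \<pi>2) = last \<pi>2"
  by (cases \<pi>2) auto

lemma reachb_trans: "reachb q b i j \<Longrightarrow> reachb q b j k \<Longrightarrow> reachb q b i k"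
  unfolding reachb_def
proof (elim exE conjE)
  fix \<pi>1 \<pi>2 assume a: "chainb q b \<pi>1" "hd \<pi>1 = i" "last \<pi>1 = j" "chainb q b \<pi>2" "hd \<pi>2 = j" "last \<pi>2 = k"
  have ne: "\<pi>1 \<noteq> []" "\<pi>2 \<noteq> []" using a by auto
  show "\<exists>\<pi>. chainb q b \<pi> \<and> hd \<pi> = i \<and> last \<pi> = k"
  proof (intro exI[of _ "\<pi>1 @ tl \<pi>2"] conjI)
    have e: "last \<pi>1 = hd \<pi>2" using a by simp
    show "chainb q b (\<pi>1 @ tl \<pi>2)" by (rule chainb_app[OF a(1) a(4) e])
    show "last (\<pi>1 @ tl \<pi>2) = k" using last_app_tl[OF ne e] a by simp
    show "hd (\<pi>1 @ tl \<pi>2) = i" using ne a by simp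
  qed
qed

lemma Erel_equiv: "equivp (Erel q)"
proof (rule equivpI)
  show "reflp (Erel q)" by (auto simp: reflp_def Erel_def)
  show "symp (Erel q)" by (auto simp: symp_def Erel_def intro: reachb_sym)
  show "transp (Erel q)" unfolding transp_def Erel_def by (metis reachb_trans)
qed

lemma reachb_lt: "reachb q b i i' \<Longrightarrow> i < Lb b"
  unfolding reachb_def by (metis chainb_set chainb_ne hd_in_set)

lemma Erel_class_finite: "finite {z. Erel q z z0}"
proof -
  have "{z. Erel q z z0} \<subseteq> insert z0 ((\<lambda>i. prod_encode (pf z0, i)) ` {..<Lb (pf z0)})"
  proof
    fix z assume "z \<in> {z. Erel q z z0}"
    then have "z = z0 \<or> (pf z = pf z0 \<and> ps z < Lb (pf z0))"
      by (auto simp: Erel_def dest: reachb_lt)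
    then show "z \<in> insert z0 ((\<lambda>i. prod_encode (pf z0, i)) ` {..<Lb (pf z0)})"
      by (metis (mono_tags, lifting) imageI insertCI lessThan_iff pe_pf_ps)
  qed
  then show ?thesis by (rule finite_subset) simp
qed


lemma chainb_nth: "\<pi> \<noteq> [] \<Longrightarrow> chainb q b \<pi> \<longleftrightarrow>
   (\<forall>k<length \<pi>. \<pi> ! k < Lb b) \<and> (\<forall>k. Suc k < length \<pi> \<longrightarrow> Grb q b (\<pi> ! k) (\<pi> ! Suc k))"
proof (induction q b \<pi> rule: chainb.induct)
  case (3 q b a c r)
  have IH: "chainb q b (c # r) \<longleftrightarrow> (\<forall>k<length (c # r). (c # r) ! k < Lb b) \<and>
      (\<forall>k. Suc k < length (c # r) \<longrightarrow> Grb q b ((c # r) ! k) ((c # r) ! Suc k))"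
    using 3 by simp
  show ?case unfolding chainb.simps(3) IH
    by (simp only: length_Cons All_less_Suc2 nth_Cons_0 nth_Cons_Suc Suc_less_eq)
       (auto simp: All_less_Suc2)
qed auto

definition edgeb :: "nat \<Rightarrow> nat \<Rightarrow> nat \<Rightarrow> nat" where
  "edgeb w z k = (let A = cnth (ps (pf z)) (cnth (pf w) k); B = cnth (ps (pf z)) (cnth (pf w) (Suc k)) in
     if pf (cnth (ps w) k) = 0 then prod_encode (A, B) else prod_encode (B, A))"

definition Good :: "nat \<Rightarrow> nat \<Rightarrow> nat \<Rightarrow> bool" where
  "Good w z z' \<longleftrightarrow> pf z = pf z' \<and> clen (pf w) \<noteq> 0 \<and> cnth (pf w) 0 = ps z \<and>
     cnth (pf w) (clen (pf w) - 1) = ps z' \<and> (\<forall>k<clen (pf w). cnth (pf w) k < clen (ps (pf z)))"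

definition Badd :: "(nat list \<Rightarrow> bool) \<Rightarrow> nat \<Rightarrow> nat \<Rightarrow> nat \<Rightarrow> bool" where
  "Badd Vr w z z' \<longleftrightarrow> z \<noteq> z' \<and> (\<not> Good w z z' \<or>
     (\<exists>k<clen (pf w) - 1. Vr [ps (cnth (ps w) k), pf (pf z), edgeb w z k]))"

lemma Erel_Badd:
  assumes V: "\<forall>e c. Uf q e c \<longleftrightarrow> (\<exists>y. \<not> Vr [y, e, c])"
  shows "Erel q z z' \<longleftrightarrow> (\<exists>w. \<not> Badd Vr w z z')"
proof
  assume "\<exists>w. \<not> Badd Vr w z z'"
  then obtain w where w: "\<not> Badd Vr w z z'" by blast
  show "Erel q z z'"
  proof (cases "z = z'")
    case False
    then have g: "Good w z z'" and nb: "\<forall>k<clen (pf w) - 1. \<not> Vr [ps (cnth (ps w) k), pf (pf z), edgeb w z k]"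
      using w by (auto simp: Badd_def)
    define \<pi> where "\<pi> = list_decode (pf w)"
    have pw: "pf w = list_encode \<pi>" by (simp add: \<pi>_def)
    have ne: "\<pi> \<noteq> []" using g by (simp add: Good_def pw)
    have nth: "cnth (pf w) k = \<pi> ! k" if "k < length \<pi>" for k using that by (simp add: pw nth0_def)
    have "chainb q (pf z) \<pi>"
    proof (subst chainb_nth[OF ne], intro conjI allI impI)
      fix k assume "k < length \<pi>"
      then show "\<pi> ! k < Lb (pf z)" using g nth by (auto simp: Good_def Lb_def pw)
    next
      fix k assume k: "Suc k < length \<pi>"
      have "\<not> Vr [ps (cnth (ps w) k), pf (pf z), edgeb w z k]" using nb k by (simp add: pw)
      then have "Uf q (pf (pf z)) (edgeb w z k)" using V by blast
      then show "Grb q (pf z) (\<pi> ! k) (\<pi> ! Suc k)"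
        using k nth[of k] nth[of "Suc k"] by (auto simp: Grb_def edgeb_def Let_def split: if_splits)
    qed
    moreover have "hd \<pi> = ps z" using g ne nth[of 0] by (simp add: Good_def hd_conv_nth pw)
    moreover have "last \<pi> = ps z'" using g ne nth[of "length \<pi> - 1"] by (simp add: Good_def last_conv_nth pw)
    ultimately show ?thesis using g by (auto simp: Erel_def reachb_def Good_def)
  qed (simp add: Erel_def)
next
  assume "Erel q z z'"
  show "\<exists>w. \<not> Badd Vr w z z'"
  proof (cases "z = z'")
    case True then show ?thesis by (simp add: Badd_def)
  next
    case False
    then obtain \<pi> where \<pi>: "pf z = pf z'" "chainb q (pf z) \<pi>" "hd \<pi> = ps z" "last \<pi> = ps z'"
      using \<open>Erel q z z'\<close> by (auto simp: Erel_def reachb_def)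
    have ne: "\<pi> \<noteq> []" using \<pi> by auto
    note ch = \<pi>(2)[unfolded chainb_nth[OF ne]]
    let ?c = "ps (pf z)" and ?e = "pf (pf z)"
    have "\<forall>k. \<exists>dy. Suc k < length \<pi> \<longrightarrow>
       \<not> Vr [ps dy, ?e, if pf dy = 0 then prod_encode (cnth ?c (\<pi> ! k), cnth ?c (\<pi> ! Suc k))
                          else prod_encode (cnth ?c (\<pi> ! Suc k), cnth ?c (\<pi> ! k))]"
    proof
      fix k
      show "\<exists>dy. Suc k < length \<pi> \<longrightarrow>
       \<not> Vr [ps dy, ?e, if pf dy = 0 then prod_encode (cnth ?c (\<pi> ! k), cnth ?c (\<pi> ! Suc k))
                          else prod_encode (cnth ?c (\<pi> ! Suc k), cnth ?c (\<pi> ! k))]"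
      proof (cases "Suc k < length \<pi>")
        case True
        then have "Grb q (pf z) (\<pi> ! k) (\<pi> ! Suc k)" using ch by blast
        then consider (a) "Uf q ?e (prod_encode (cnth ?c (\<pi> ! k), cnth ?c (\<pi> ! Suc k)))"
          | (b) "Uf q ?e (prod_encode (cnth ?c (\<pi> ! Suc k), cnth ?c (\<pi> ! k)))"
          unfolding Grb_def by blast
        then show ?thesis
        proof cases
          case a then obtain y where "\<not> Vr [y, ?e, prod_encode (cnth ?c (\<pi> ! k), cnth ?c (\<pi> ! Suc k))]"
            using V by blast
          then show ?thesis by (intro exI[of _ "prod_encode (0, y)"]) simp
        next
          case b then obtain y where "\<not> Vr [y, ?e, prod_encode (cnth ?c (\<pi> ! Suc k), cnth ?c (\<pi> ! k))]"
            using V by blast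
          then show ?thesis by (intro exI[of _ "prod_encode (1, y)"]) simp
        qed
      qed simp
    qed
    then obtain DY where DY: "\<And>k. Suc k < length \<pi> \<Longrightarrow>
       \<not> Vr [ps (DY k), ?e, if pf (DY k) = 0 then prod_encode (cnth ?c (\<pi> ! k), cnth ?c (\<pi> ! Suc k))
                          else prod_encode (cnth ?c (\<pi> ! Suc k), cnth ?c (\<pi> ! k))]"
      by metis
    define w where "w = prod_encode (list_encode \<pi>, list_encode (map DY [0..<length \<pi>]))"
    have pw: "pf w = list_encode \<pi>" "ps w = list_encode (map DY [0..<length \<pi>])" by (simp_all add: w_def)
    have "Good w z z'" unfolding Good_def pw
      using \<pi> ne ch by (auto simp: nth0_def hd_conv_nth last_conv_nth Lb_def)
    moreover have "\<not> Vr [ps (cnth (ps w) k), pf (pf z), edgeb w z k]" if "k < clen (pf w) - 1" for k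
    proof -
      have k: "Suc k < length \<pi>" using that by (simp add: pw)
      show ?thesis using DY[OF k] k by (simp add: edgeb_def Let_def pw nth0_def)
    qed
    ultimately show ?thesis by (intro exI[of _ w]) (simp add: Badd_def)
  qed
qed


definition "EA = App CNTH [App PS [App PF [V 2]], App CNTH [App PF [V 1], V 0]]"
definition "EB = App CNTH [App PS [App PF [V 2]], App CNTH [App PF [V 1], Add (V 0) (C 1)]]"
definition "EDGE = IteX (EqX (App PF [App CNTH [App PS [V 1], V 0]]) (C 0)) (App PE [EA, EB]) (App PE [EB, EA])"
definition "YK = App PS [App CNTH [App PS [V 1], V 0]]"
definition "EZ = App PF [App PF [V 2]]"
definition "GD = AndX (EqX (App PF [V 1]) (App PF [V 2]))
 (AndX (NzX (App CLEN [App PF [V 0]]))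
 (AndX (EqX (App CNTH [App PF [V 0], C 0]) (App PS [V 1]))
 (AndX (EqX (App CNTH [App PF [V 0], Sub (App CLEN [App PF [V 0]]) (C 1)]) (App PS [V 2]))
       (AllX (App CLEN [App PF [V 0]]) (LtX (App CNTH [App PF [V 1], V 0]) (App CLEN [App PS [App PF [V 2]]]))))))"

lemma ev_EDGE: "ev EDGE [k, w, z, z'] = edgeb w z k"
  by (simp add: EDGE_def EA_def EB_def edgeb_def Let_def)
lemma ev_YK: "ev YK [k, w, z, z'] = ps (cnth (ps w) k)" by (simp add: YK_def)
lemma ev_EZ: "ev EZ [k, w, z, z'] = pf (pf z)" by (simp add: EZ_def)
lemma ev_GD: "ev GD [w, z, z'] \<noteq> 0 \<longleftrightarrow> Good w z z'"
  by (auto simp: GD_def Good_def)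
lemma wfx_E4: "wfx 4 EDGE" "wfx 4 YK" "wfx 4 EZ"
  by (simp_all add: EDGE_def EA_def EB_def YK_def EZ_def numeral_eq_Suc)
lemma wfx_GD: "wfx 3 GD" by (simp add: GD_def numeral_eq_Suc)

lemma Badd_sigma:
  assumes Vr: "sigma_rel q 3 Vr"
  shows "sigma_rel q 3 (\<lambda>xs. Badd Vr (xs ! 0) (xs ! 1) (xs ! 2))"
proof -
  have b1: "sigma_rel q 4 (\<lambda>xs. Vr (map (\<lambda>g. ev g xs) [YK, EZ, EDGE]))"
    by (rule sigma_subst[OF Vr]) (auto simp: wfx_E4)
  have b2: "sigma_rel q 3 (\<lambda>xs. \<exists>k<ev (Sub (App CLEN [App PF [V 0]]) (C 1)) xs.
      Vr (map (\<lambda>g. ev g (k # xs)) [YK, EZ, EDGE]))"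
    by (rule sigma_bex) (use b1 in \<open>simp_all add: numeral_eq_Suc\<close>)
  have d1: "decidable_rel 3 (\<lambda>xs. \<not> Good (xs ! 0) (xs ! 1) (xs ! 2))"
  proof (rule decI[where e = "NotX GD"])
    show "wfx 3 (NotX GD)" using wfx_GD by simp
    fix xs :: "nat list" assume "length xs = 3"
    then obtain w z z' where "xs = [w, z, z']" by (auto simp: numeral_eq_Suc length_Suc_conv)
    then show "(\<not> Good (xs ! 0) (xs ! 1) (xs ! 2)) \<longleftrightarrow> ev (NotX GD) xs \<noteq> 0"
      using ev_GD[of w z z'] by auto
  qed
  note b3 = sigma_or[OF b2 d1]
  have d2: "decidable_rel 3 (\<lambda>xs. xs ! 1 \<noteq> xs ! 2)"
    by (rule decI[where e = "NotX (EqX (V 1) (V 2))"]) auto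
  note b4 = sigma_and[OF b3 d2]
  show ?thesis
  proof (rule sigma_ext[OF b4])
    fix xs :: "nat list" assume "length xs = 3"
    then obtain w z z' where xs: "xs = [w, z, z']" by (auto simp: numeral_eq_Suc length_Suc_conv)
    show "Badd Vr (xs ! 0) (xs ! 1) (xs ! 2) \<longleftrightarrow>
      ((\<exists>k<ev (Sub (App CLEN [App PF [V 0]]) (C 1)) xs. Vr (map (\<lambda>g. ev g (k # xs)) [YK, EZ, EDGE])) \<or>
        \<not> Good (xs ! 0) (xs ! 1) (xs ! 2)) \<and> xs ! 1 \<noteq> xs ! 2"
      unfolding xs by (auto simp: Badd_def ev_EDGE ev_YK ev_EZ)
  qed
qed

lemma Erel_sigma: "sigma_rel (Suc q) 2 (\<lambda>xs. Erel q (xs ! 0) (xs ! 1))"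
proof -
  obtain Vr where Vr: "sigma_rel q 3 Vr" "\<forall>xs. length xs = 2 \<longrightarrow> (Uf q (xs ! 0) (xs ! 1) \<longleftrightarrow> (\<exists>y. \<not> Vr (y # xs)))"
    using Uf_sigma[of q] by (auto simp: numeral_eq_Suc)
  have V: "\<forall>e c. Uf q e c \<longleftrightarrow> (\<exists>y. \<not> Vr [y, e, c])"
    using Vr(2) by (auto dest: spec[of _ "[_, _]"])
  show ?thesis unfolding sigma_rel.simps
    by (rule exI[of _ "\<lambda>xs. Badd Vr (xs ! 0) (xs ! 1) (xs ! 2)"])
       (use Badd_sigma[OF Vr(1)] Erel_Badd[OF V] in \<open>auto simp: numeral_eq_Suc length_Suc_conv\<close>)
qed


lemma sigma_eq_index:
  assumes "sigma_rel (Suc q) 2 (\<lambda>xs. F (xs ! 0) (xs ! 1))"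
  shows "\<exists>e. \<forall>a b. F a b \<longleftrightarrow> Uf q e (prod_encode (a, b))"
proof -
  have s: "sigma_rel (Suc q) 1 (\<lambda>xs. (\<lambda>ys. F (ys ! 0) (ys ! 1)) (map (\<lambda>g. ev g xs) [App PF [V 0], App PS [V 0]]))"
    by (rule sigma_subst[OF assms]) auto
  obtain e where e: "\<forall>x. (\<lambda>ys. F (ys ! 0) (ys ! 1)) (map (\<lambda>g. ev g [x]) [App PF [V 0], App PS [V 0]]) \<longleftrightarrow> Uf q e x"
    using Uf_univ[OF s] by blast
  have "F a b \<longleftrightarrow> Uf q e (prod_encode (a, b))" for a b
    using e[rule_format, of "prod_encode (a, b)"] by simp
  then show ?thesis by blast
qed

definition gfun :: "nat \<Rightarrow> nat \<Rightarrow> nat" where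
  "gfun e c = list_encode (map (\<lambda>i. prod_encode (prod_encode (e, c), i)) [0..<clen c])"

lemma rec_build: "k \<le> n \<Longrightarrow> rec_nat 0 (\<lambda>k r. ccons (T (n - 1 - k)) r) k = list_encode (map T [n - k..<n])"
proof (induction k)
  case 0 then show ?case by simp
next
  case (Suc k)
  then have IH: "rec_nat 0 (\<lambda>k r. ccons (T (n - 1 - k)) r) k = list_encode (map T [n - k..<n])" by simp
  have "[n - Suc k..<n] = (n - Suc k) # [n - k..<n]"
    using Suc.prems by (simp add: upt_conv_Cons Suc_diff_Suc)
  moreover have "n - 1 - k = n - Suc k" by simp
  ultimately show ?case using IH by simp
qed

lemma gfun_computable: "computable1 (gfun e)"
proof -
  define GX where "GX = Rec (App CLEN [V 0]) (C 0)
     (App CCONS [App PE [App PE [C e, V 2], Sub (Sub (App CLEN [V 2]) (C 1)) (V 0)], V 1])"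
  have w: "wfx 1 GX" by (simp add: GX_def)
  have ev: "ev GX [c] = gfun e c" for c
  proof -
    have "ev GX [c] = rec_nat 0 (\<lambda>k r. ccons ((\<lambda>i. prod_encode (prod_encode (e, c), i)) (clen c - 1 - k)) r) (clen c)"
      by (simp add: GX_def)
    also have "\<dots> = gfun e c" by (subst rec_build) (simp_all add: gfun_def)
    finally show ?thesis .
  qed
  show ?thesis unfolding computable1_def
    by (rule tr_ext[OF wf_tr[OF w]]) (auto simp: ev length_Suc_conv)
qed

lemma chain_F:
  assumes eqv: "equivp F" and G: "\<And>a c. a < length xs \<Longrightarrow> c < length xs \<Longrightarrow> Grb q b a c \<longleftrightarrow> F (xs ! a) (xs ! c)"
    and L: "Lb b = length xs"
  shows "chainb q b \<pi> \<Longrightarrow> F (xs ! hd \<pi>) (xs ! last \<pi>)"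
proof (induction \<pi>)
  case (Cons a r)
  show ?case
  proof (cases r)
    case Nil then show ?thesis using eqv by (simp add: equivp_reflp)
  next
    case (Cons c r')
    have ch: "a < Lb b" "Grb q b a c" "chainb q b (c # r')" using Cons.prems Cons by auto
    have c: "c < Lb b" using chainb_set[OF ch(3)] by simp
    have "F (xs ! a) (xs ! c)" using G ch c L by simp
    moreover have "F (xs ! c) (xs ! last r)" using Cons.IH ch(3) Cons by simp
    ultimately show ?thesis using eqv Cons by (auto elim: equivp_transp)
  qed
qed simp

lemma finitary:
  assumes F: "sigma_eqrel (Suc q) F"
  shows "finitary_reducible F (Erel q)"
proof -
  have eqv: "equivp F" and sF: "sigma_rel (Suc q) 2 (\<lambda>xs. F (xs ! 0) (xs ! 1))"
    using F by (auto simp: sigma_eqrel_def)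
  obtain e where e: "\<forall>a b. F a b \<longleftrightarrow> Uf q e (prod_encode (a, b))" using sigma_eq_index[OF sF] by blast
  have main: "\<exists>ys. gfun e (list_encode xs) = list_encode ys \<and> length ys = length xs \<and>
      (\<forall>i j. i < j \<and> j < length xs \<longrightarrow> (F (xs ! i) (xs ! j) \<longleftrightarrow> Erel q (ys ! i) (ys ! j)))" for xs
  proof -
    let ?t = "prod_encode (e, list_encode xs)"
    let ?ys = "map (\<lambda>i. prod_encode (?t, i)) [0..<length xs]"
    have L: "Lb ?t = length xs" by (simp add: Lb_def)
    have G: "Grb q ?t a c \<longleftrightarrow> F (xs ! a) (xs ! c)" if "a < length xs" "c < length xs" for a c
      using that e eqv by (auto simp: Grb_def nth0_def dest: equivp_symp)
    have "F (xs ! i) (xs ! j) \<longleftrightarrow> Erel q (?ys ! i) (?ys ! j)" if ij: "i < j" "j < length xs" for i j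
    proof
      assume f: "F (xs ! i) (xs ! j)"
      have "chainb q ?t [i, j]" using ij G f L by simp
      then have "reachb q ?t i j" unfolding reachb_def by (intro exI[of _ "[i, j]"]) simp
      then show "Erel q (?ys ! i) (?ys ! j)" using ij by (simp add: Erel_def)
    next
      assume "Erel q (?ys ! i) (?ys ! j)"
      then have "reachb q ?t i j" using ij by (simp add: Erel_def)
      then obtain \<pi> where "chainb q ?t \<pi>" "hd \<pi> = i" "last \<pi> = j" by (auto simp: reachb_def)
      then show "F (xs ! i) (xs ! j)" using chain_F[OF eqv G L] by blast
    qed
    then show ?thesis by (intro exI[of _ ?ys]) (simp add: gfun_def)
  qed
  show ?thesis unfolding finitary_reducible_def
    by (intro exI[of _ "gfun e"] conjI gfun_computable allI impI) (rule main)
qed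


definition F0 :: "nat \<Rightarrow> nat \<Rightarrow> bool" where "F0 x y \<longleftrightarrow> x = y \<or> (K x \<and> K y)"

lemma F0_equiv: "equivp F0"
  by (rule equivpI) (auto simp: reflp_def symp_def transp_def F0_def)

lemma F0_sigma1: "sigma_rel 1 2 (\<lambda>xs. F0 (xs ! 0) (xs ! 1))"
proof -
  define Q where "Q xs \<longleftrightarrow> xs ! 1 \<noteq> xs ! 2 \<and> \<not> (Tpred (xs ! 1) (xs ! 1) (pf (xs ! 0)) \<and> Tpred (xs ! 2) (xs ! 2) (ps (xs ! 0)))" for xs
  have d: "decidable_rel 3 Q"
    by (rule decI[where e = "AndX (NotX (EqX (V 1) (V 2))) (NotX (AndX (App TP [V 1, V 1, App PF [V 0]]) (App TP [V 2, V 2, App PS [V 0]])))"])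
       (auto simp: Q_def numeral_eq_Suc)
  have eq: "F0 x y \<longleftrightarrow> (\<exists>w. \<not> Q [w, x, y])" for x y
  proof
    assume "F0 x y"
    then consider "x = y" | "K x \<and> K y" by (auto simp: F0_def)
    then show "\<exists>w. \<not> Q [w, x, y]"
    proof cases
      case 1 then show ?thesis by (simp add: Q_def)
    next
      case 2
      then obtain a b where "Tpred x x a" "Tpred y y b" by (auto simp: K_def U1_def)
      then show ?thesis by (intro exI[of _ "prod_encode (a, b)"]) (simp add: Q_def)
    qed
  next
    assume "\<exists>w. \<not> Q [w, x, y]"
    then show "F0 x y" by (auto simp: Q_def F0_def K_def U1_def)
  qed
  show ?thesis unfolding One_nat_def sigma_rel.simps
    by (rule exI[of _ Q]) (use d eq in \<open>auto simp: numeral_eq_Suc length_Suc_conv\<close>)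
qed

lemma finite_dec: "finite S \<Longrightarrow> \<exists>e. wfx 1 e \<and> (\<forall>x. ev e [x] \<noteq> 0 \<longleftrightarrow> x \<in> S)"
proof (induction rule: finite_induct)
  case empty then show ?case by (intro exI[of _ "C 0"]) simp
next
  case (insert a S)
  then obtain e where "wfx 1 e" "\<forall>x. ev e [x] \<noteq> 0 \<longleftrightarrow> x \<in> S" by blast
  then show ?case by (intro exI[of _ "OrX (EqX (V 0) (C a)) e"]) auto
qed

lemma F0_not_red: "\<not> computably_reducible F0 (Erel q)"
proof
  assume "computably_reducible F0 (Erel q)"
  then obtain g where g: "computable1 g" "\<forall>x y. F0 x y \<longleftrightarrow> Erel q (g x) (g y)"
    by (auto simp: computably_reducible_def)
  have "decidable_rel 1 (\<lambda>xs. K (xs ! 0))"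
  proof (cases "\<exists>a. K a")
    case False
    then show ?thesis by (intro decI[where e = "C 0"]) auto
  next
    case True
    then obtain a where a: "K a" by blast
    obtain e where e: "wfx 1 e" "\<forall>x. ev e [x] \<noteq> 0 \<longleftrightarrow> x \<in> {z. Erel q z (g a)}"
      using finite_dec[OF Erel_class_finite] by blast
    have Kx: "K x \<longleftrightarrow> Erel q (g x) (g a)" for x
      using g(2)[rule_format, of x a] a by (auto simp: F0_def)
    show ?thesis
    proof (rule decI[where e = "App e [Fn (\<lambda>xs. g (hd xs))]"])
      show "wfx 1 (App e [Fn (\<lambda>xs. g (hd xs))])" using e(1) g(1) by (simp add: computable1_def)
      fix xs :: "nat list" assume "length xs = 1"
      then obtain x where "xs = [x]" by (auto simp: length_Suc_conv)
      then show "K (xs ! 0) \<longleftrightarrow> ev (App e [Fn (\<lambda>xs. g (hd xs))]) xs \<noteq> 0"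
        using e(2) Kx by simp
    qed
  qed
  then show False using K_undec by blast
qed

theorem theorem4p12:
  fixes p :: nat
  assumes "p > 0"
  shows "\<exists>E. sigma_eqrel p E \<and>
             (\<forall>F. sigma_eqrel p F \<longrightarrow> finitary_reducible F E) \<and>
             (\<exists>F. sigma_eqrel p F \<and> \<not> computably_reducible F E)"
proof -
  obtain q where p: "p = Suc q" using assms by (cases p) auto
  have "sigma_eqrel p (Erel q)" unfolding p sigma_eqrel_def using Erel_equiv Erel_sigma by blast
  moreover have "\<forall>F. sigma_eqrel p F \<longrightarrow> finitary_reducible F (Erel q)" unfolding p using finitary by blast
  moreover have "sigma_eqrel p F0" unfolding sigma_eqrel_def
    using F0_equiv sigma_lift_le[OF F0_sigma1] assms by auto
  ultimately show ?thesis using F0_not_red by blast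
qed


end
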